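(* For every MSSP instance there exists an optimal autonomous profile, i.e. $\pi^*\in\Pi$ with $\mathbb{E}_{\pi^*}[\textit{MHit}]=\inf_{\pi\in\Pi}\mathbb{E}_\pi[\textit{MHit}]$, and for every $n\ge1$ there exists a $\Pi_n$-optimal profile, i.e. $\pi^*\in\Pi_n$ with $\mathbb{E}_{\pi^*}[\textit{MHit}]=\inf_{\pi\in\Pi_n}\mathbb{E}_\pi[\textit{MHit}]$.
   Context: An MDP is a triple $M=(S,\textit{Act},P)$ with finite sets $S$, $\textit{Act}$ and $P:S\times\textit{Act}\times S\to[0,1]$ such that for each $s$ the set $\textit{En}(s)$ of enabled actions (those $a$ with $\sum_t P(s,a,t)=1$) is nonempty. An MSSP instance consists of an MDP $M$, a number $k\ge1$ of agents, and for each agent $i$ an initial state $\iota_i\in S$ and target set $T_i\subseteq S$ with $\iota_i\notin T_i\neq\emptyset$. In the autonomous setting each agent $i$ uses its own strategy $\sigma_i$ in $M$ which depends only on agent $i$'s own history (not on the other agents); the strategy is given by a set $\mathit{Mem}_i$ of memory states, a (randomized) initial memory, a randomized rule choosing an enabled action from the current state and memory state, and a randomized rule updating the memory state; agents evolve independently, agent $i$ starting in $\iota_i$. A tuple $\pi=(\sigma_1,\dots,\sigma_k)$ is an (autonomous) profile; $\Pi$ is the class of all autonomous profiles and, for $n\ge1$, $\Pi_n$ is the class of profiles in which every $\mathit{Mem}_i$ has at most $n$ elements ($\Pi_1$ = memoryless profiles). $\textit{MHit}$ is the first time step at which some agent $i$ is in a state of $T_i$ ($\infty$ if never), and $\mathbb{E}_\pi[\textit{MHit}]$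 is its expectation under $\pi$. *)

theory Defs
  imports "HOL-Probability.Probability"
begin

(* An MDP over a finite state type 's and finite action type 'a is given by
   P :: 's => 'a => 's => real.  S = UNIV, Act = UNIV. *)

definition En :: "('s::finite \<Rightarrow> 'a \<Rightarrow> 's \<Rightarrow> real) \<Rightarrow> 's \<Rightarrow> 'a set" where
  "En P s = {a. (\<Sum>t\<in>UNIV. P s a t) = 1}"

definition is_MDP :: "('s::finite \<Rightarrow> 'a::finite \<Rightarrow> 's \<Rightarrow> real) \<Rightarrow> bool" where
  "is_MDP P \<longleftrightarrow> (\<forall>s a t. 0 \<le> P s a t \<and> P s a t \<le> 1) \<and> (\<forall>s. En P s \<noteq> {})"

(* successor distribution P(s,a,.) (meaningful for enabled a) *)
definition trans_pmf :: "('s::finite \<Rightarrow> 'a \<Rightarrow> 's \<Rightarrow> real) \<Rightarrow> 's \<Rightarrow> 'a \<Rightarrow> 's pmf" where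
  "trans_pmf P s a = embed_pmf (P s a)"

definition is_MSSP :: "('s::finite \<Rightarrow> 'a::finite \<Rightarrow> 's \<Rightarrow> real) \<Rightarrow> nat \<Rightarrow> (nat \<Rightarrow> 's) \<Rightarrow> (nat \<Rightarrow> 's set) \<Rightarrow> bool" where
  "is_MSSP P k iota T \<longleftrightarrow> is_MDP P \<and> k \<ge> 1 \<and> (\<forall>i<k. iota i \<notin> T i \<and> T i \<noteq> {})"

(* A finite-memory (randomized) strategy; memory states are natural numbers,
   the actual memory set Mem is given separately (see valid_strat). *)
record ('s, 'a) strat =
  init_mem :: "nat pmf"
  act_rule :: "'s \<Rightarrow> nat \<Rightarrow> 'a pmf"
  upd_rule :: "nat \<Rightarrow> 's \<Rightarrow> 'a \<Rightarrow> 's \<Rightarrow> nat pmf"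
     (* memory, current state, chosen action, next state  \<mapsto>  new memory *)

definition valid_strat :: "('s::finite \<Rightarrow> 'a \<Rightarrow> 's \<Rightarrow> real) \<Rightarrow> nat set \<Rightarrow> ('s, 'a) strat \<Rightarrow> bool" where
  "valid_strat P Mem \<sigma> \<longleftrightarrow>
     set_pmf (init_mem \<sigma>) \<subseteq> Mem \<and>
     (\<forall>s. \<forall>m\<in>Mem. set_pmf (act_rule \<sigma> s m) \<subseteq> En P s \<and>
        (\<forall>a s'. set_pmf (upd_rule \<sigma> m s a s') \<subseteq> Mem))"

type_synonym ('s, 'a) profile = "nat \<Rightarrow> ('s, 'a) strat"

definition in_Pi :: "('s::finite \<Rightarrow> 'a \<Rightarrow> 's \<Rightarrow> real) \<Rightarrow> nat \<Rightarrow> ('s, 'a) profile \<Rightarrow> bool" where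
  "in_Pi P k \<pi> \<longleftrightarrow> (\<forall>i<k. \<exists>Mem. valid_strat P Mem (\<pi> i))"

definition in_Pi_n :: "('s::finite \<Rightarrow> 'a \<Rightarrow> 's \<Rightarrow> real) \<Rightarrow> nat \<Rightarrow> nat \<Rightarrow> ('s, 'a) profile \<Rightarrow> bool" where
  "in_Pi_n P k n \<pi> \<longleftrightarrow> (\<forall>i<k. \<exists>Mem. finite Mem \<and> card Mem \<le> n \<and> valid_strat P Mem (\<pi> i))"

definition agent_step :: "('s::finite \<Rightarrow> 'a \<Rightarrow> 's \<Rightarrow> real) \<Rightarrow> ('s, 'a) strat \<Rightarrow> 's \<times> nat \<Rightarrow> ('s \<times> nat) pmf" where
  "agent_step P \<sigma> c =
     (case c of (s, m) \<Rightarrow>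
       do { a \<leftarrow> act_rule \<sigma> s m;
            s' \<leftarrow> trans_pmf P s a;
            m' \<leftarrow> upd_rule \<sigma> m s a s';
            return_pmf (s', m') })"

(* joint configuration: agent index \<mapsto> (state, memory); agents evolve independently *)
definition joint_init :: "nat \<Rightarrow> (nat \<Rightarrow> 's) \<Rightarrow> ('s, 'a) profile \<Rightarrow> (nat \<Rightarrow> 's \<times> nat) pmf" where
  "joint_init k iota \<pi> = Pi_pmf {..<k} undefined (\<lambda>i. map_pmf (\<lambda>m. (iota i, m)) (init_mem (\<pi> i)))"

definition joint_step :: "('s::finite \<Rightarrow> 'a \<Rightarrow> 's \<Rightarrow> real) \<Rightarrow> nat \<Rightarrow> ('s, 'a) profile \<Rightarrow> (nat \<Rightarrow> 's \<times> nat) \<Rightarrow> (nat \<Rightarrow> 's \<times> nat) pmf" where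
  "joint_step P k \<pi> c = Pi_pmf {..<k} undefined (\<lambda>i. agent_step P (\<pi> i) (c i))"

(* distribution of the joint run prefix of length t+1 (configurations at times 0..t) *)
fun path_pmf :: "('s::finite \<Rightarrow> 'a \<Rightarrow> 's \<Rightarrow> real) \<Rightarrow> nat \<Rightarrow> (nat \<Rightarrow> 's) \<Rightarrow> ('s, 'a) profile \<Rightarrow> nat \<Rightarrow> (nat \<Rightarrow> 's \<times> nat) list pmf" where
  "path_pmf P k iota \<pi> 0 = map_pmf (\<lambda>c. [c]) (joint_init k iota \<pi>)"
| "path_pmf P k iota \<pi> (Suc t) =
     bind_pmf (path_pmf P k iota \<pi> t) (\<lambda>p. map_pmf (\<lambda>c. p @ [c]) (joint_step P k \<pi> (last p)))"

definition some_hit :: "nat \<Rightarrow> (nat \<Rightarrow> 's set) \<Rightarrow> (nat \<Rightarrow> 's \<times> nat) \<Rightarrow> bool" where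
  "some_hit k T c \<longleftrightarrow> (\<exists>i<k. fst (c i) \<in> T i)"

definition prob_MHit_eq :: "('s::finite \<Rightarrow> 'a \<Rightarrow> 's \<Rightarrow> real) \<Rightarrow> nat \<Rightarrow> (nat \<Rightarrow> 's) \<Rightarrow> (nat \<Rightarrow> 's set) \<Rightarrow> ('s, 'a) profile \<Rightarrow> nat \<Rightarrow> real" where
  "prob_MHit_eq P k iota T \<pi> t =
     measure_pmf.prob (path_pmf P k iota \<pi> t)
       {p. some_hit k T (p ! t) \<and> (\<forall>j<t. \<not> some_hit k T (p ! j))}"

(* E_pi[MHit] = sum_t t * Pr[MHit = t] + \<infinity> * Pr[MHit = \<infinity>] *)
definition exp_MHit :: "('s::finite \<Rightarrow> 'a \<Rightarrow> 's \<Rightarrow> real) \<Rightarrow> nat \<Rightarrow> (nat \<Rightarrow> 's) \<Rightarrow> (nat \<Rightarrow> 's set) \<Rightarrow> ('s, 'a) profile \<Rightarrow> ennreal" where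
  "exp_MHit P k iota T \<pi> =
     (\<Sum>t. of_nat t * ennreal (prob_MHit_eq P k iota T \<pi> t))
     + \<top> * (1 - (\<Sum>t. ennreal (prob_MHit_eq P k iota T \<pi> t)))"

end

theory Submission
  imports Defs
begin

lemma compact_fun_all:
  fixes S :: "'x::metric_space set"
  assumes "compact S"
  shows "compact {\<theta> :: 'i::countable \<Rightarrow> 'x. \<forall>j. \<theta> j \<in> S}"
proof -
  have "compactin (product_topology (\<lambda>_. euclidean) UNIV) (PiE UNIV (\<lambda>_::'i. S))"
    using assms by (simp add: compactin_PiE compactin_euclidean_iff)
  moreover have "PiE UNIV (\<lambda>_::'i. S) = {\<theta>. \<forall>j. \<theta> j \<in> S}" by (auto simp: PiE_def Pi_def)
  ultimately show ?thesis by (simp add: euclidean_product_topology compactin_euclidean_iff)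
qed

lemma exists_min:
  fixes \<Theta> :: "'x::metric_space set" and \<phi> :: "nat \<Rightarrow> 'x \<Rightarrow> nat \<Rightarrow> real" and k :: nat
  assumes cpt: "compact \<Theta>" and ne: "\<Theta> \<noteq> {}"
    and cont: "\<And>i t. continuous_on \<Theta> (\<lambda>\<theta>. \<phi> i \<theta> t)"
    and nonneg: "\<And>i \<theta> t. \<theta> \<in> \<Theta> \<Longrightarrow> 0 \<le> \<phi> i \<theta> t"
  shows "\<exists>\<theta>. (\<forall>i. \<theta> i \<in> \<Theta>) \<and> (\<forall>\<theta>'. (\<forall>i. \<theta>' i \<in> \<Theta>) \<longrightarrow>
     (\<Sum>t. ennreal (\<Prod>i<k. \<phi> i (\<theta> i) t)) \<le> (\<Sum>t. ennreal (\<Prod>i<k. \<phi> i (\<theta>' i) t)))"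
proof -
  define K where "K = {\<theta> :: nat \<Rightarrow> 'x. \<forall>j. \<theta> j \<in> \<Theta>}"
  define G where "G \<theta> = (\<Sum>t. ennreal (\<Prod>i<k. \<phi> i (\<theta> i) t))" for \<theta> :: "nat \<Rightarrow> 'x"
  define S where "S N \<theta> = (\<Sum>t<N. \<Prod>i<k. \<phi> i (\<theta> i) t)" for N and \<theta> :: "nat \<Rightarrow> 'x"
  have cK: "compact K" unfolding K_def by (rule compact_fun_all[OF cpt])
  have neK: "K \<noteq> {}" using ne unfolding K_def by auto
  obtain u where u: "\<And>n. u n \<in> G ` K" and ulim: "u \<longlonglongrightarrow> Inf (G ` K)"
    using Inf_as_limit[of "G ` K"] neK by auto
  from u have "\<forall>n. \<exists>\<theta>. \<theta> \<in> K \<and> u n = G \<theta>" by blast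
  then obtain f where fu: "\<forall>n. f n \<in> K \<and> u n = G (f n)" by metis
  then have f: "\<And>n. f n \<in> K" and uf: "\<And>n. u n = G (f n)" by auto
  obtain l r where l: "l \<in> K" and r: "strict_mono r" and flim: "(f \<circ> r) \<longlonglongrightarrow> l"
    using compact_imp_seq_compact[OF cK] f unfolding seq_compact_def by metis
  have contS: "continuous_on K (S N)" for N
  proof -
    have "continuous_on K (\<lambda>\<theta>. \<phi> i (\<theta> i) t)" for i t
    proof -
      have "continuous_on K (\<lambda>\<theta>. \<theta> i)"
        by (rule continuous_on_subset[OF continuous_on_product_coordinates]) auto
      moreover have "(\<lambda>\<theta>. \<theta> i) ` K \<subseteq> \<Theta>" unfolding K_def by auto
      ultimately show ?thesis using continuous_on_compose2[OF cont] by blast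
    qed
    then show ?thesis unfolding S_def by (intro continuous_on_sum continuous_on_prod) auto
  qed
  have Snn: "\<theta> \<in> K \<Longrightarrow> 0 \<le> (\<Prod>i<k. \<phi> i (\<theta> i) t)" for \<theta> t
    using nonneg unfolding K_def by (auto intro: prod_nonneg)
  have SG: "\<theta> \<in> K \<Longrightarrow> ennreal (S N \<theta>) \<le> G \<theta>" for \<theta> N
  proof -
    assume "\<theta> \<in> K"
    then have "ennreal (S N \<theta>) = (\<Sum>t<N. ennreal (\<Prod>i<k. \<phi> i (\<theta> i) t))"
      unfolding S_def using Snn by (simp add: sum_ennreal)
    also have "\<dots> \<le> G \<theta>" unfolding G_def by (rule sum_le_suminf) auto
    finally show ?thesis .
  qed
  have "ennreal (S N l) \<le> Inf (G ` K)" for N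
  proof (rule LIMSEQ_le)
    have "(\<lambda>n. S N ((f \<circ> r) n)) \<longlonglongrightarrow> S N l"
      using contS[of N] l f flim by (auto simp: continuous_on_sequentially comp_def)
    then show "(\<lambda>n. ennreal (S N ((f \<circ> r) n))) \<longlonglongrightarrow> ennreal (S N l)"
      by (rule tendsto_ennrealI)
    show "(\<lambda>n. u (r n)) \<longlonglongrightarrow> Inf (G ` K)"
      using LIMSEQ_subseq_LIMSEQ[OF ulim r] by (simp add: comp_def)
    show "\<exists>N0. \<forall>n\<ge>N0. ennreal (S N ((f \<circ> r) n)) \<le> u (r n)"
      using SG f uf by auto
  qed
  then have "G l \<le> Inf (G ` K)"
    unfolding G_def suminf_eq_SUP
    using Snn[OF l] by (auto intro!: SUP_least simp: S_def sum_ennreal)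
  then have "\<forall>\<theta>'\<in>K. G l \<le> G \<theta>'"
    by (meson INF_lower order_trans)
  then show ?thesis using l unfolding K_def G_def by auto
qed

lemma ennreal_suminf_swap: "(\<Sum>u. \<Sum>t. g u t :: ennreal) = (\<Sum>t. \<Sum>u. g u t)"
proof -
  have "(\<Sum>t. \<Sum>u. g u t) = (\<integral>\<^sup>+t. (\<Sum>u. g u t) \<partial>count_space UNIV)"
    by (simp add: nn_integral_count_space_nat)
  also have "\<dots> = (\<Sum>u. \<integral>\<^sup>+t. g u t \<partial>count_space UNIV)"
    by (rule nn_integral_suminf) simp
  also have "\<dots> = (\<Sum>u. \<Sum>t. g u t)" by (simp add: nn_integral_count_space_nat)
  finally show ?thesis ..
qed

lemma exp_seq_lemma:
  fixes s h :: "nat \<Rightarrow> real"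
  assumes s0: "\<And>t. 0 \<le> s t" and hnn: "\<And>t. 0 \<le> h t"
    and h0: "h 0 = 1 - s 0" and hS: "\<And>t. h (Suc t) = s t - s (Suc t)"
  shows "(\<Sum>t. of_nat t * ennreal (h t)) + \<top> * (1 - (\<Sum>t. ennreal (h t))) = (\<Sum>t. ennreal (s t))"
proof -
  define s' where "s' n = (if n = 0 then 1 else s (n - 1))" for n
  have hs': "h t = s' t - s' (Suc t)" for t
    by (cases t) (auto simp: s'_def h0 hS)
  have dec: "decseq s'" unfolding decseq_Suc_iff using hs' hnn by (metis diff_ge_0_iff_ge)
  have bdd: "bdd_below (range s')" 
    by (rule bdd_belowI[of _ 0]) (auto simp: s'_def s0)
  define L where "L = Inf (range s')"
  have lim: "s' \<longlonglongrightarrow> L" unfolding L_def using LIMSEQ_decseq_INF[OF bdd] dec by simp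
  have L0: "0 \<le> L" unfolding L_def by (rule cINF_greatest) (auto simp: s'_def s0)
  have Ls: "L \<le> s t" for t 
  proof -
    have "L \<le> s' (Suc t)" unfolding L_def by (rule cINF_lower[OF bdd]) simp
    then show ?thesis by (simp add: s'_def)
  qed
  have L1: "L \<le> 1" 
  proof -
    have "L \<le> s' 0" unfolding L_def by (rule cINF_lower[OF bdd]) simp
    then show ?thesis by (simp add: s'_def)
  qed
  have hfun: "h = (\<lambda>n. s' n - s' (Suc n))" using hs' by auto
  have hsum: "h sums (1 - L)"
    using telescope_sums'[OF lim] unfolding hfun by (simp add: s'_def)
  have tail: "(\<lambda>t. if u < t then h t else 0) sums (s u - L)" for u
  proof -
    have "(\<lambda>i. h (i + Suc u)) sums (s u - L)"
    proof -
      have "(\<lambda>i. s' (i + Suc u)) \<longlonglongrightarrow> L" using LIMSEQ_ignore_initial_segment[OF lim, of "Suc u"] by simp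
      from telescope_sums'[OF this] have "(\<lambda>i. s' (i + Suc u) - s' (Suc (i + Suc u))) sums (s' (Suc u) - L)" by simp
      then show ?thesis using hs' by (simp add: s'_def)
    qed
    then have "(\<lambda>i. (\<lambda>t. if u < t then h t else 0) (i + Suc u)) sums (s u - L)" by simp
    then have "(\<lambda>t. if u < t then h t else 0) sums (s u - L + (\<Sum>t<Suc u. if u < t then h t else 0))"
      using sums_iff_shift[of "\<lambda>t. if u < t then h t else 0" "Suc u"] by blast
    then show ?thesis by simp
  qed
  have A: "(\<Sum>t. of_nat t * ennreal (h t)) = (\<Sum>u. ennreal (s u - L))"
  proof -
    have "of_nat t * ennreal (h t) = (\<Sum>u. if u < t then ennreal (h t) else 0)" for t
      by (subst suminf_finite[of "{..<t}"]) auto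
    then have "(\<Sum>t. of_nat t * ennreal (h t)) = (\<Sum>t. \<Sum>u. if u < t then ennreal (h t) else 0)"
      by simp
    also have "\<dots> = (\<Sum>u. \<Sum>t. if u < t then ennreal (h t) else 0)" by (rule ennreal_suminf_swap[symmetric])
    also have "\<dots> = (\<Sum>u. ennreal (s u - L))"
    proof (rule suminf_cong)
      fix u
      have "(\<Sum>t. if u < t then ennreal (h t) else 0) = (\<Sum>t. ennreal (if u < t then h t else 0))"
        by (intro suminf_cong) auto
      also have "\<dots> = ennreal (s u - L)" by (rule suminf_ennreal_eq[OF _ tail]) (simp add: hnn)
      finally show "(\<Sum>t. if u < t then ennreal (h t) else 0) = ennreal (s u - L)" .
    qed
    finally show ?thesis .
  qed
  have B: "1 - (\<Sum>t. ennreal (h t)) = ennreal L"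
    using suminf_ennreal_eq[OF hnn hsum] L0 L1 by (simp add: ennreal_minus flip: ennreal_1)
  show ?thesis
  proof (cases "L = 0")
    case True
    then show ?thesis using A B by simp
  next
    case False
    then have Lp: "0 < L" using L0 by simp
    have "(\<Sum>t. ennreal (s t)) = \<top>"
    proof (rule ccontr)
      assume "(\<Sum>t. ennreal (s t)) \<noteq> \<top>"
      then have "summable s" using summable_suminf_not_top s0 by blast
      then have "s \<longlonglongrightarrow> 0" by (rule summable_LIMSEQ_zero)
      then have "L \<le> 0" using Ls by (intro LIMSEQ_le_const) auto
      then show False using Lp by simp
    qed
    moreover have "\<top> * ennreal L = \<top>" using Lp by (simp add: ennreal_mult_top)
    ultimately show ?thesis using B by simp
  qed
qed

definition snh where
  "snh P k iota T \<pi> t = measure_pmf.prob (path_pmf P k iota \<pi> t) {p. \<forall>j\<le>t. \<not> some_hit k T (p ! j)}"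

lemma path_len: "p \<in> set_pmf (path_pmf P k iota \<pi> t) \<Longrightarrow> length p = Suc t"
  by (induction t arbitrary: p) auto

lemma path_butlast: "map_pmf butlast (path_pmf P k iota \<pi> (Suc t)) = path_pmf P k iota \<pi> t"
  by (simp add: map_bind_pmf map_pmf_comp bind_return_pmf')

lemma prob_split:
  "measure_pmf.prob M {p. \<forall>j<t. \<not> some_hit k T (p ! j)} =
   measure_pmf.prob M {p. some_hit k T (p ! t) \<and> (\<forall>j<t. \<not> some_hit k T (p ! j))}
   + measure_pmf.prob M {p. \<forall>j\<le>t. \<not> some_hit k T (p ! j)}"
proof -
  have "{p. \<forall>j<t. \<not> some_hit k T (p ! j)} =
        {p. some_hit k T (p ! t) \<and> (\<forall>j<t. \<not> some_hit k T (p ! j))} \<union> {p. \<forall>j\<le>t. \<not> some_hit k T (p ! j)}"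
    by (auto simp: order_le_less)
  then show ?thesis
    by (subst measure_pmf.finite_measure_Union[symmetric]) auto
qed

lemma prob_MHit_eq_0: "prob_MHit_eq P k iota T \<pi> 0 = 1 - snh P k iota T \<pi> 0"
  using prob_split[of "path_pmf P k iota \<pi> 0" 0 k T]
  by (simp add: prob_MHit_eq_def snh_def)

lemma prob_MHit_eq_Suc:
  "prob_MHit_eq P k iota T \<pi> (Suc t) = snh P k iota T \<pi> t - snh P k iota T \<pi> (Suc t)"
proof -
  let ?M = "path_pmf P k iota \<pi> (Suc t)"
  have "measure_pmf.prob ?M {p. \<forall>j<Suc t. \<not> some_hit k T (p ! j)} = snh P k iota T \<pi> t"
  proof -
    have "snh P k iota T \<pi> t = measure_pmf.prob (map_pmf butlast ?M) {p. \<forall>j\<le>t. \<not> some_hit k T (p ! j)}"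
      by (simp only: path_butlast snh_def)
    also have "\<dots> = measure_pmf.prob ?M (butlast -` {p. \<forall>j\<le>t. \<not> some_hit k T (p ! j)})"
      by (rule measure_map_pmf)
    also have "\<dots> = measure_pmf.prob ?M (butlast -` {p. \<forall>j\<le>t. \<not> some_hit k T (p ! j)} \<inter> set_pmf ?M)"
      by (rule measure_Int_set_pmf[symmetric])
    also have "butlast -` {p. \<forall>j\<le>t. \<not> some_hit k T (p ! j)} \<inter> set_pmf ?M
        = {p. \<forall>j<Suc t. \<not> some_hit k T (p ! j)} \<inter> set_pmf ?M"
    proof -
      have "butlast p ! j = p ! j" if "p \<in> set_pmf ?M" "j \<le> t" for p j
        using path_len[OF that(1)] that(2) by (simp add: nth_butlast)
      then show ?thesis by (auto simp: less_Suc_eq_le simp del: path_pmf.simps)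
    qed
    also have "measure_pmf.prob ?M \<dots> = measure_pmf.prob ?M {p. \<forall>j<Suc t. \<not> some_hit k T (p ! j)}"
      by (rule measure_Int_set_pmf)
    finally show ?thesis ..
  qed
  then show ?thesis
    using prob_split[of ?M "Suc t" k T] by (simp add: prob_MHit_eq_def snh_def)
qed




fun aY :: "('s::finite \<Rightarrow> 'a \<Rightarrow> 's \<Rightarrow> real) \<Rightarrow> ('s, 'a) strat \<Rightarrow> 's \<Rightarrow> 's set \<Rightarrow> nat \<Rightarrow> ('s \<times> nat \<times> bool) pmf" where
  "aY P \<sigma> \<iota> Ti 0 = map_pmf (\<lambda>m. (\<iota>, m, \<iota> \<notin> Ti)) (init_mem \<sigma>)"
| "aY P \<sigma> \<iota> Ti (Suc t) = bind_pmf (aY P \<sigma> \<iota> Ti t)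
     (\<lambda>x. map_pmf (\<lambda>y. (fst y, snd y, snd (snd x) \<and> fst y \<notin> Ti)) (agent_step P \<sigma> (fst x, fst (snd x))))"

definition ralive where
  "ralive P \<sigma> \<iota> Ti t = measure_pmf.prob (aY P \<sigma> \<iota> Ti t) {x. snd (snd x)}"

lemma Pi_pmf_map_idx:
  assumes "finite A"
  shows "map_pmf (\<lambda>h i. if i \<in> A then g i (h i) else D) (Pi_pmf A d p) = Pi_pmf A D (\<lambda>i. map_pmf (g i) (p i))"
proof -
  have "Pi_pmf A D (\<lambda>i. map_pmf (g i) (p i)) = Pi_pmf A D (\<lambda>i. bind_pmf (p i) (\<lambda>x. return_pmf (g i x)))"
    by (simp add: map_pmf_def)
  also have "\<dots> = bind_pmf (Pi_pmf A d p) (\<lambda>f. Pi_pmf A D (\<lambda>i. return_pmf (g i (f i))))"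
    by (rule Pi_pmf_bind[OF assms])
  also have "\<dots> = bind_pmf (Pi_pmf A d p) (\<lambda>f. return_pmf (\<lambda>i. if i \<in> A then g i (f i) else D))"
    by (simp add: Pi_pmf_return_pmf[OF assms])
  finally show ?thesis by (simp add: map_pmf_def)
qed

lemma all_app1: "(\<forall>j<Suc (length p). Q ((p @ [c]) ! j)) \<longleftrightarrow> (\<forall>j<length p. Q (p ! j)) \<and> Q c"
proof
  assume a: "\<forall>j<Suc (length p). Q ((p @ [c]) ! j)"
  have "Q (p ! j)" if "j < length p" for j using a[rule_format, of j] that by (simp add: nth_append)
  moreover have "Q c" using a[rule_format, of "length p"] by simp
  ultimately show "(\<forall>j<length p. Q (p ! j)) \<and> Q c" by blast
next
  assume "(\<forall>j<length p. Q (p ! j)) \<and> Q c"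
  then show "\<forall>j<Suc (length p). Q ((p @ [c]) ! j)" by (auto simp: nth_append less_Suc_eq)
qed

definition Fp :: "nat \<Rightarrow> (nat \<Rightarrow> 's set) \<Rightarrow> (nat \<Rightarrow> 's \<times> nat) list \<Rightarrow> nat \<Rightarrow> 's \<times> nat \<times> bool" where
  "Fp k T p = (\<lambda>i. if i < k then (fst (last p i), snd (last p i), \<forall>j<length p. fst ((p ! j) i) \<notin> T i) else undefined)"

lemma path_factor:
  fixes P :: "'s::finite \<Rightarrow> 'a \<Rightarrow> 's \<Rightarrow> real" and T :: "nat \<Rightarrow> 's set"
  shows   "map_pmf (Fp k T) (path_pmf P k iota \<pi> t) = Pi_pmf {..<k} undefined (\<lambda>i. aY P (\<pi> i) (iota i) (T i) t)"
proof (induction t)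
  case 0
  have e: "(\<lambda>c. Fp k T [c]) = (\<lambda>h i. if i \<in> {..<k} then (\<lambda>y. (fst y, snd y, fst y \<notin> T i)) (h i) else undefined)"
    by (auto simp: fun_eq_iff Fp_def less_Suc_eq)
  have "map_pmf (Fp k T) (path_pmf P k iota \<pi> 0) =
      map_pmf (\<lambda>h i. if i \<in> {..<k} then (\<lambda>y. (fst y, snd y, fst y \<notin> T i)) (h i) else undefined) (joint_init k iota \<pi>)"
    by (simp add: map_pmf_comp e)
  also have "\<dots> = Pi_pmf {..<k} undefined (\<lambda>i. map_pmf (\<lambda>y. (fst y, snd y, fst y \<notin> T i)) (map_pmf (\<lambda>m. (iota i, m)) (init_mem (\<pi> i))))"
    unfolding joint_init_def by (rule Pi_pmf_map_idx) simp
  also have "\<dots> = Pi_pmf {..<k} undefined (\<lambda>i. aY P (\<pi> i) (iota i) (T i) 0)"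
    by (simp add: map_pmf_comp)
  finally show ?case .
next
  case (Suc t)
  define G where "G x c = (\<lambda>i. if i \<in> {..<k} then (\<lambda>y. (fst y, snd y, snd (snd (x i)) \<and> fst y \<notin> T i)) (c i) else undefined)"
    for x :: "nat \<Rightarrow> 's \<times> nat \<times> bool" and c :: "nat \<Rightarrow> 's \<times> nat"
  define H where "H x = map_pmf (G x) (Pi_pmf {..<k} undefined (\<lambda>i. agent_step P (\<pi> i) (fst (x i), fst (snd (x i)))))" for x
  have 1: "map_pmf (\<lambda>c. Fp k T (p @ [c])) (joint_step P k \<pi> (last p)) = H (Fp k T p)"
    if "p \<in> set_pmf (path_pmf P k iota \<pi> t)" for p
  proof -
    have len: "length p = Suc t" using path_len[OF that] .
    have "(\<lambda>c. Fp k T (p @ [c])) = G (Fp k T p)"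
    proof (intro ext)
      fix c i
      show "Fp k T (p @ [c]) i = G (Fp k T p) c i"
        using all_app1[of p "\<lambda>x. fst (x i) \<notin> T i" c] by (simp add: Fp_def G_def)
    qed
    moreover have "joint_step P k \<pi> (last p) = Pi_pmf {..<k} undefined (\<lambda>i. agent_step P (\<pi> i) (fst (Fp k T p i), fst (snd (Fp k T p i))))"
      unfolding joint_step_def by (rule Pi_pmf_cong) (auto simp: Fp_def)
    ultimately show ?thesis unfolding H_def by simp
  qed
  have "map_pmf (Fp k T) (path_pmf P k iota \<pi> (Suc t)) =
        bind_pmf (path_pmf P k iota \<pi> t) (\<lambda>p. map_pmf (\<lambda>c. Fp k T (p @ [c])) (joint_step P k \<pi> (last p)))"
    by (simp add: map_bind_pmf map_pmf_comp)
  also have "\<dots> = bind_pmf (path_pmf P k iota \<pi> t) (\<lambda>p. H (Fp k T p))"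
    by (rule bind_pmf_cong) (auto simp: 1)
  also have "\<dots> = bind_pmf (map_pmf (Fp k T) (path_pmf P k iota \<pi> t)) H"
    by (simp add: bind_map_pmf)
  also have "\<dots> = bind_pmf (Pi_pmf {..<k} undefined (\<lambda>i. aY P (\<pi> i) (iota i) (T i) t)) H"
    by (simp add: Suc)
  also have "\<dots> = bind_pmf (Pi_pmf {..<k} undefined (\<lambda>i. aY P (\<pi> i) (iota i) (T i) t))
      (\<lambda>x. Pi_pmf {..<k} undefined (\<lambda>i. map_pmf (\<lambda>y. (fst y, snd y, snd (snd (x i)) \<and> fst y \<notin> T i))
             (agent_step P (\<pi> i) (fst (x i), fst (snd (x i))))))"
    unfolding H_def G_def by (subst Pi_pmf_map_idx) simp_all
  also have "\<dots> = Pi_pmf {..<k} undefined (\<lambda>i. aY P (\<pi> i) (iota i) (T i) (Suc t))"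
    by (simp only: aY.simps, rule Pi_pmf_bind[symmetric]) simp
  finally show ?case .
qed

lemma snh_factor:
  "measure_pmf.prob (path_pmf P k iota \<pi> t) {p. \<forall>j\<le>t. \<not> some_hit k T (p ! j)} =
   (\<Prod>i<k. ralive P (\<pi> i) (iota i) (T i) t)"
proof -
  let ?M = "path_pmf P k iota \<pi> t"
  have "measure_pmf.prob ?M {p. \<forall>j\<le>t. \<not> some_hit k T (p ! j)} =
        measure_pmf.prob ?M ({p. \<forall>j\<le>t. \<not> some_hit k T (p ! j)} \<inter> set_pmf ?M)"
    by (simp add: measure_Int_set_pmf)
  also have "{p. \<forall>j\<le>t. \<not> some_hit k T (p ! j)} \<inter> set_pmf ?M =
      Fp k T -` Pi {..<k} (\<lambda>_. {x. snd (snd x)}) \<inter> set_pmf ?M"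
  proof -
    have 1: "p \<in> Fp k T -` Pi {..<k} (\<lambda>_. {x. snd (snd x)}) \<longleftrightarrow> (\<forall>i<k. \<forall>j<length p. fst ((p ! j) i) \<notin> T i)" for p
      unfolding vimage_def Pi_iff lessThan_iff Fp_def by (simp add: Ball_def)
    have 2: "(\<forall>j\<le>t. \<not> some_hit k T (p ! j)) \<longleftrightarrow> (\<forall>i<k. \<forall>j<Suc t. fst ((p ! j) i) \<notin> T i)" for p
      unfolding some_hit_def less_Suc_eq_le by blast
    show ?thesis
    proof (rule set_eqI)
      fix p
      show "p \<in> {p. \<forall>j\<le>t. \<not> some_hit k T (p ! j)} \<inter> set_pmf ?M \<longleftrightarrow> p \<in> Fp k T -` Pi {..<k} (\<lambda>_. {x. snd (snd x)}) \<inter> set_pmf ?M"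
      proof (cases "p \<in> set_pmf ?M")
        case True then have "length p = Suc t" by (rule path_len)
        then show ?thesis using True 1[of p] 2[of p] by simp
      qed simp
    qed
  qed
  also have "measure_pmf.prob ?M \<dots> = measure_pmf.prob (map_pmf (Fp k T) ?M) (Pi {..<k} (\<lambda>_. {x. snd (snd x)}))"
    by (simp add: measure_Int_set_pmf measure_map_pmf)
  also have "\<dots> = (\<Prod>i<k. ralive P (\<pi> i) (iota i) (T i) t)"
    by (simp add: path_factor measure_Pi_pmf_Pi ralive_def)
  finally show ?thesis .
qed

lemma embed_pmf_pmf: "embed_pmf (pmf p) = p"
  by (rule type_definition.Rep_inverse[OF td_pmf_embed_pmf])

lemma prob_bind_pmf: "measure_pmf.prob (bind_pmf M f) A = measure_pmf.expectation M (\<lambda>x. measure_pmf.prob (f x) A)"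
proof -
  have "measure_pmf.prob (bind_pmf M f) A = pmf (map_pmf (\<lambda>x. x \<in> A) (bind_pmf M f)) True"
    by (simp add: pmf_map vimage_def)
  also have "\<dots> = pmf (bind_pmf M (\<lambda>x. map_pmf (\<lambda>x. x \<in> A) (f x))) True"
    by (simp add: map_bind_pmf)
  also have "\<dots> = measure_pmf.expectation M (\<lambda>x. measure_pmf.prob (f x) A)"
    by (simp add: pmf_bind pmf_map vimage_def)
  finally show ?thesis .
qed

lemma pmf_embed_finite:
  fixes f :: "'x::finite \<Rightarrow> real"
  assumes "\<And>x. 0 \<le> f x" "(\<Sum>x\<in>UNIV. f x) = 1"
  shows "pmf (embed_pmf f) = f" "set_pmf (embed_pmf f) = {x. f x \<noteq> 0}"
proof -
  have *: "(\<integral>\<^sup>+ x. ennreal (f x) \<partial>count_space UNIV) = 1"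
    using assms by (simp add: nn_integral_count_space_finite sum_ennreal)
  show "pmf (embed_pmf f) = f" using pmf_embed_pmf[OF assms(1) *] by auto
  show "set_pmf (embed_pmf f) = {x. f x \<noteq> 0}" using set_embed_pmf[OF assms(1) *] .
qed

lemma pmf_embed_nat:
  fixes f :: "nat \<Rightarrow> real"
  assumes "\<And>x. 0 \<le> f x" "(\<Sum>x<n. f x) = 1" "\<And>x. x \<ge> n \<Longrightarrow> f x = 0"
  shows "pmf (embed_pmf f) = f" "set_pmf (embed_pmf f) = {x. f x \<noteq> 0}"
proof -
  have "(\<integral>\<^sup>+ x. ennreal (f x) \<partial>count_space UNIV) = (\<Sum>x. ennreal (f x))"
    by (simp add: nn_integral_count_space_nat)
  also have "\<dots> = (\<Sum>x<n. ennreal (f x))" using assms(3) by (intro suminf_finite) auto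
  also have "\<dots> = 1" using assms by (simp add: sum_ennreal)
  finally have *: "(\<integral>\<^sup>+ x. ennreal (f x) \<partial>count_space UNIV) = 1" .
  show "pmf (embed_pmf f) = f" using pmf_embed_pmf[OF assms(1) *] by auto
  show "set_pmf (embed_pmf f) = {x. f x \<noteq> 0}" using set_embed_pmf[OF assms(1) *] .
qed

lemma pmf_trans:
  assumes "is_MDP P" "a \<in> En P s"
  shows "pmf (trans_pmf P s a) s' = P s a s'"
  using pmf_embed_finite(1)[of "P s a"] assms unfolding is_MDP_def En_def trans_pmf_def by auto

lemma set_agent_step:
  assumes "valid_strat P Mem \<sigma>" "m \<in> Mem" "y \<in> set_pmf (agent_step P \<sigma> (s, m))"
  shows "snd y \<in> Mem"
  using assms unfolding agent_step_def valid_strat_def by fastforce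

lemma set_aY:
  assumes "valid_strat P Mem \<sigma>" "x \<in> set_pmf (aY P \<sigma> \<iota> Ti t)"
  shows "fst (snd x) \<in> Mem"
  using assms(2)
proof (induction t arbitrary: x)
  case 0 then show ?case using assms(1) unfolding valid_strat_def by auto
next
  case (Suc t)
  then obtain x0 y where "x0 \<in> set_pmf (aY P \<sigma> \<iota> Ti t)" "y \<in> set_pmf (agent_step P \<sigma> (fst x0, fst (snd x0)))"
    "x = (fst y, snd y, snd (snd x0) \<and> fst y \<notin> Ti)" by auto
  moreover have "fst (snd x0) \<in> Mem" using Suc.IH calculation(1) by blast
  ultimately show ?case using set_agent_step[OF assms(1), of "fst (snd x0)" y "fst x0"] by simp
qed

lemma step_fst: "map_pmf fst (agent_step P \<sigma> (s, m)) = bind_pmf (act_rule \<sigma> s m) (trans_pmf P s)"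
  unfolding agent_step_def by (simp add: map_bind_pmf bind_return_pmf' map_pmf_def[symmetric] map_pmf_comp)

lemma prob_step_fst:
  assumes "is_MDP P" "valid_strat P Mem \<sigma>" "m \<in> Mem"
  shows "measure_pmf.prob (agent_step P \<sigma> (s, m)) {y. fst y = s'} = (\<Sum>a\<in>UNIV. pmf (act_rule \<sigma> s m) a * P s a s')"
proof -
  have "measure_pmf.prob (agent_step P \<sigma> (s, m)) {y. fst y = s'} = pmf (map_pmf fst (agent_step P \<sigma> (s, m))) s'"
    by (simp add: pmf_map vimage_def)
  also have "\<dots> = measure_pmf.expectation (act_rule \<sigma> s m) (\<lambda>a. pmf (trans_pmf P s a) s')"
    by (simp add: step_fst pmf_bind)
  also have "\<dots> = (\<Sum>a\<in>UNIV. pmf (trans_pmf P s a) s' * pmf (act_rule \<sigma> s m) a)"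
    by (rule integral_measure_pmf_real) auto
  also have "\<dots> = (\<Sum>a\<in>UNIV. pmf (act_rule \<sigma> s m) a * P s a s')"
  proof (rule sum.cong)
    fix a
    show "pmf (trans_pmf P s a) s' * pmf (act_rule \<sigma> s m) a = pmf (act_rule \<sigma> s m) a * P s a s'"
    proof (cases "a \<in> set_pmf (act_rule \<sigma> s m)")
      case True
      then have "a \<in> En P s" using assms unfolding valid_strat_def by auto
      then show ?thesis using pmf_trans[OF assms(1)] by simp
    next
      case False then show ?thesis by (simp add: set_pmf_eq)
    qed
  qed simp
  finally show ?thesis .
qed

lemma integrable_pmf_bounded:
  fixes f :: "'x \<Rightarrow> real"
  assumes "\<And>x. \<bar>f x\<bar> \<le> B"
  shows "integrable (measure_pmf M) f"
  by (rule measure_pmf.integrable_const_bound[where B=B]) (use assms in auto)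

definition Zs where
  "Zs P \<sigma> \<iota> Ti t s = measure_pmf.prob (aY P \<sigma> \<iota> Ti t) {x. fst x = s \<and> snd (snd x)}"

definition Es where
  "Es P \<sigma> \<iota> Ti t s a = measure_pmf.expectation (aY P \<sigma> \<iota> Ti t)
     (\<lambda>x. if fst x = s \<and> snd (snd x) then pmf (act_rule \<sigma> s (fst (snd x))) a else 0)"

lemma Zs_0: "Zs P \<sigma> \<iota> Ti 0 s = (if s = \<iota> \<and> \<iota> \<notin> Ti then 1 else 0)"
  by (auto simp: Zs_def measure_map_pmf vimage_def)

lemma Zs_Suc:
  assumes mdp: "is_MDP P" and val: "valid_strat P Mem \<sigma>"
  shows "Zs P \<sigma> \<iota> Ti (Suc t) s' = (if s' \<in> Ti then 0 else
           (\<Sum>s\<in>UNIV. \<Sum>a\<in>UNIV. Es P \<sigma> \<iota> Ti t s a * P s a s'))"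
proof -
  let ?Y = "aY P \<sigma> \<iota> Ti t"
  define f where "f s a x = (if fst x = s \<and> snd (snd x) then pmf (act_rule \<sigma> s (fst (snd x))) a else 0)"
    for s a and x :: "'a \<times> nat \<times> bool"
  have fint: "integrable (measure_pmf ?Y) (f s a)" for s a
    by (rule integrable_pmf_bounded[where B=1]) (auto simp: f_def pmf_le_1)
  have "Zs P \<sigma> \<iota> Ti (Suc t) s' = measure_pmf.expectation ?Y
     (\<lambda>x. measure_pmf.prob (map_pmf (\<lambda>y. (fst y, snd y, snd (snd x) \<and> fst y \<notin> Ti)) (agent_step P \<sigma> (fst x, fst (snd x))))
        {x. fst x = s' \<and> snd (snd x)})"
    by (simp add: Zs_def prob_bind_pmf)
  also have "\<dots> = measure_pmf.expectation ?Y
     (\<lambda>x. if s' \<in> Ti then 0 else (\<Sum>s\<in>UNIV. \<Sum>a\<in>UNIV. f s a x * P s a s'))"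
  proof (rule integral_cong_AE)
    show "AE x in measure_pmf ?Y. measure_pmf.prob (map_pmf (\<lambda>y. (fst y, snd y, snd (snd x) \<and> fst y \<notin> Ti)) (agent_step P \<sigma> (fst x, fst (snd x))))
        {x. fst x = s' \<and> snd (snd x)} = (if s' \<in> Ti then 0 else (\<Sum>s\<in>UNIV. \<Sum>a\<in>UNIV. f s a x * P s a s'))"
    proof (rule AE_pmfI)
      fix x assume x: "x \<in> set_pmf ?Y"
      have mem: "fst (snd x) \<in> Mem" using set_aY[OF val x] .
      have pre: "(\<lambda>y. (fst y, snd y, snd (snd x) \<and> fst y \<notin> Ti)) -` {x. fst x = s' \<and> snd (snd x)}
           = (if snd (snd x) \<and> s' \<notin> Ti then {y. fst y = s'} else {})" by auto
      have sumf: "(\<Sum>s\<in>UNIV. \<Sum>a\<in>UNIV. f s a x * P s a s') =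
          (if snd (snd x) then (\<Sum>a\<in>UNIV. pmf (act_rule \<sigma> (fst x) (fst (snd x))) a * P (fst x) a s') else 0)"
      proof -
        have "(\<Sum>a\<in>UNIV. f s a x * P s a s') = (if s = fst x then
           (if snd (snd x) then (\<Sum>a\<in>UNIV. pmf (act_rule \<sigma> (fst x) (fst (snd x))) a * P (fst x) a s') else 0) else 0)" for s
          unfolding f_def by auto
        then show ?thesis by simp
      qed
      show "measure_pmf.prob (map_pmf (\<lambda>y. (fst y, snd y, snd (snd x) \<and> fst y \<notin> Ti)) (agent_step P \<sigma> (fst x, fst (snd x))))
        {x. fst x = s' \<and> snd (snd x)} = (if s' \<in> Ti then 0 else (\<Sum>s\<in>UNIV. \<Sum>a\<in>UNIV. f s a x * P s a s'))"
        unfolding measure_map_pmf pre sumf using prob_step_fst[OF mdp val mem, of "fst x" s'] by auto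
    qed
  qed simp_all
  also have "\<dots> = (if s' \<in> Ti then 0 else (\<Sum>s\<in>UNIV. \<Sum>a\<in>UNIV. Es P \<sigma> \<iota> Ti t s a * P s a s'))"
  proof (cases "s' \<in> Ti")
    case False
    have "measure_pmf.expectation ?Y (\<lambda>x. \<Sum>s\<in>UNIV. \<Sum>a\<in>UNIV. f s a x * P s a s')
        = (\<Sum>s\<in>UNIV. \<Sum>a\<in>UNIV. measure_pmf.expectation ?Y (f s a) * P s a s')"
      using fint by (simp add: Bochner_Integration.integral_sum)
    then show ?thesis using False by (simp add: Es_def f_def[abs_def])
  qed simp
  finally show ?thesis .
qed


definition mk_markov :: "(nat \<times> 's \<times> 'a \<Rightarrow> real) \<Rightarrow> ('s, 'a) strat" where
  "mk_markov \<theta> = \<lparr>init_mem = return_pmf 0, act_rule = (\<lambda>s m. embed_pmf (\<lambda>a. \<theta> (m, s, a))),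
                   upd_rule = (\<lambda>m s a s'. return_pmf (Suc m))\<rparr>"

definition ThM :: "('s::finite \<Rightarrow> 'a::finite \<Rightarrow> 's \<Rightarrow> real) \<Rightarrow> (nat \<times> 's \<times> 'a \<Rightarrow> real) set" where
  "ThM P = {\<theta>. (\<forall>j. 0 \<le> \<theta> j \<and> \<theta> j \<le> 1) \<and> (\<forall>t s. (\<Sum>a\<in>UNIV. \<theta> (t, s, a)) = 1) \<and>
              (\<forall>t s a. a \<notin> En P s \<longrightarrow> \<theta> (t, s, a) = 0)}"

fun UM :: "('s::finite \<Rightarrow> 'a::finite \<Rightarrow> 's \<Rightarrow> real) \<Rightarrow> 's \<Rightarrow> 's set \<Rightarrow> (nat \<times> 's \<times> 'a \<Rightarrow> real) \<Rightarrow> nat \<Rightarrow> 's \<Rightarrow> real" where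
  "UM P \<iota> Ti \<theta> 0 s = (if s = \<iota> \<and> \<iota> \<notin> Ti then 1 else 0)"
| "UM P \<iota> Ti \<theta> (Suc t) s' = (if s' \<in> Ti then 0 else
     (\<Sum>s\<in>UNIV. \<Sum>a\<in>UNIV. UM P \<iota> Ti \<theta> t s * \<theta> (t, s, a) * P s a s'))"

definition phiM where "phiM P \<iota> Ti \<theta> t = (\<Sum>s\<in>UNIV. UM P \<iota> Ti \<theta> t s)"

lemma ralive_Zs: "ralive P \<sigma> \<iota> Ti t = (\<Sum>s\<in>UNIV. Zs P \<sigma> \<iota> Ti t s)"
proof -
  have "measure_pmf.prob (aY P \<sigma> \<iota> Ti t) {x. snd (snd x)} = measure_pmf.prob (aY P \<sigma> \<iota> Ti t) (\<Union>s\<in>UNIV. {x. fst x = s \<and> snd (snd x)})"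
    by (intro arg_cong[of _ _ "measure_pmf.prob (aY P \<sigma> \<iota> Ti t)"]) auto
  moreover have "measure_pmf.prob (aY P \<sigma> \<iota> Ti t) (\<Union>s\<in>UNIV. {x. fst x = s \<and> snd (snd x)})
     = (\<Sum>s\<in>UNIV. measure_pmf.prob (aY P \<sigma> \<iota> Ti t) {x. fst x = s \<and> snd (snd x)})"
    by (rule measure_pmf.finite_measure_finite_Union) (auto simp: disjoint_family_on_def)
  ultimately show ?thesis unfolding ralive_def Zs_def by simp
qed

lemma Zs_UM:
  assumes mdp: "is_MDP P" and val: "valid_strat P Mem \<sigma>"
    and E: "\<And>t s a. Es P \<sigma> \<iota> Ti t s a = \<theta> (t, s, a) * Zs P \<sigma> \<iota> Ti t s"
  shows "Zs P \<sigma> \<iota> Ti t s = UM P \<iota> Ti \<theta> t s"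
proof (induction t arbitrary: s)
  case 0 then show ?case by (simp add: Zs_0)
next
  case (Suc t) then show ?case by (simp add: Zs_Suc[OF mdp val] E mult_ac)
qed

lemma ralive_phiM:
  assumes mdp: "is_MDP P" and val: "valid_strat P Mem \<sigma>"
    and E: "\<And>t s a. Es P \<sigma> \<iota> Ti t s a = \<theta> (t, s, a) * Zs P \<sigma> \<iota> Ti t s"
  shows "ralive P \<sigma> \<iota> Ti t = phiM P \<iota> Ti \<theta> t"
  unfolding ralive_Zs phiM_def using Zs_UM[OF assms] by simp

lemma ThM_embed:
  assumes "\<theta> \<in> ThM P"
  shows "pmf (embed_pmf (\<lambda>a. \<theta> (m, s, a))) = (\<lambda>a. \<theta> (m, s, a))"
    "set_pmf (embed_pmf (\<lambda>a. \<theta> (m, s, a))) = {a. \<theta> (m, s, a) \<noteq> 0}"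
  using pmf_embed_finite[of "\<lambda>a. \<theta> (m, s, a)"] assms unfolding ThM_def by auto

lemma valid_markov:
  assumes "\<theta> \<in> ThM P"
  shows "valid_strat P UNIV (mk_markov \<theta>)"
  using assms ThM_embed(2)[OF assms] unfolding valid_strat_def mk_markov_def ThM_def by (auto, metis)

lemma set_aY_markov: "x \<in> set_pmf (aY P (mk_markov \<theta>) \<iota> Ti t) \<Longrightarrow> fst (snd x) = t"
proof (induction t arbitrary: x)
  case 0 then show ?case by (auto simp: mk_markov_def)
next
  case (Suc t) then show ?case by (fastforce simp: mk_markov_def agent_step_def)
qed

lemma Es_markov:
  assumes "\<theta> \<in> ThM P"
  shows "Es P (mk_markov \<theta>) \<iota> Ti t s a = \<theta> (t, s, a) * Zs P (mk_markov \<theta>) \<iota> Ti t s"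
proof -
  let ?Y = "aY P (mk_markov \<theta>) \<iota> Ti t"
  have "Es P (mk_markov \<theta>) \<iota> Ti t s a = measure_pmf.expectation ?Y (\<lambda>x. \<theta> (t, s, a) * indicator {x. fst x = s \<and> snd (snd x)} x)"
    unfolding Es_def
  proof (rule integral_cong_AE)
    show "AE x in measure_pmf ?Y. (if fst x = s \<and> snd (snd x) then pmf (act_rule (mk_markov \<theta>) s (fst (snd x))) a else 0)
       = \<theta> (t, s, a) * indicator {x. fst x = s \<and> snd (snd x)} x"
      by (rule AE_pmfI) (auto simp: set_aY_markov mk_markov_def ThM_embed(1)[OF assms])
  qed simp_all
  also have "\<dots> = \<theta> (t, s, a) * Zs P (mk_markov \<theta>) \<iota> Ti t s"
    by (simp add: Zs_def)
  finally show ?thesis .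
qed

lemma ralive_markov:
  assumes "is_MDP P" "\<theta> \<in> ThM P"
  shows "ralive P (mk_markov \<theta>) \<iota> Ti t = phiM P \<iota> Ti \<theta> t"
  by (rule ralive_phiM[OF assms(1) valid_markov[OF assms(2)] Es_markov[OF assms(2)]])

lemma Es_nonneg: "0 \<le> Es P \<sigma> \<iota> Ti t s a"
  unfolding Es_def by (rule integral_nonneg_AE) auto

lemma Es_sum:
  fixes \<sigma> :: "('s::finite, 'a::finite) strat"
  shows "(\<Sum>a\<in>UNIV. Es P \<sigma> \<iota> Ti t s a) = Zs P \<sigma> \<iota> Ti t s"
proof -
  let ?Y = "aY P \<sigma> \<iota> Ti t"
  have "(\<Sum>a\<in>UNIV. Es P \<sigma> \<iota> Ti t s a) = measure_pmf.expectation ?Y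
      (\<lambda>x. \<Sum>a\<in>UNIV. if fst x = s \<and> snd (snd x) then pmf (act_rule \<sigma> s (fst (snd x))) a else 0)"
    unfolding Es_def
    by (rule Bochner_Integration.integral_sum[symmetric], rule integrable_pmf_bounded[where B=1]) (auto simp: pmf_le_1)
  also have "\<dots> = measure_pmf.expectation ?Y (indicator {x. fst x = s \<and> snd (snd x)})"
  proof (rule Bochner_Integration.integral_cong)
    fix x
    show "(\<Sum>a\<in>UNIV. if fst x = s \<and> snd (snd x) then pmf (act_rule \<sigma> s (fst (snd x))) a else 0) =
      indicator {x. fst x = s \<and> snd (snd x)} x"
      using sum_pmf_eq_1[of UNIV "act_rule \<sigma> s (fst (snd x))"]
      by (cases "fst x = s \<and> snd (snd x)") (auto simp: indicator_def)
  qed simp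
  also have "\<dots> = Zs P \<sigma> \<iota> Ti t s" by (simp add: Zs_def)
  finally show ?thesis .
qed

lemma Es_le_Zs:
  fixes \<sigma> :: "('s::finite, 'a::finite) strat"
  shows "Es P \<sigma> \<iota> Ti t s a \<le> Zs P \<sigma> \<iota> Ti t s"
proof -
  have "Es P \<sigma> \<iota> Ti t s a \<le> (\<Sum>a\<in>UNIV. Es P \<sigma> \<iota> Ti t s a)"
    by (rule member_le_sum) (auto simp: Es_nonneg)
  then show ?thesis by (simp add: Es_sum)
qed

lemma Es_En:
  assumes val: "valid_strat P Mem \<sigma>" and a: "a \<notin> En P s"
  shows "Es P \<sigma> \<iota> Ti t s a = 0"
proof -
  have "Es P \<sigma> \<iota> Ti t s a = measure_pmf.expectation (aY P \<sigma> \<iota> Ti t) (\<lambda>x. 0)"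
    unfolding Es_def
  proof (rule integral_cong_AE)
    show "AE x in measure_pmf (aY P \<sigma> \<iota> Ti t). (if fst x = s \<and> snd (snd x) then pmf (act_rule \<sigma> s (fst (snd x))) a else 0) = 0"
    proof (rule AE_pmfI)
      fix x assume "x \<in> set_pmf (aY P \<sigma> \<iota> Ti t)"
      then have "fst (snd x) \<in> Mem" using set_aY[OF val] by blast
      then have "a \<notin> set_pmf (act_rule \<sigma> s (fst (snd x)))" using val a unfolding valid_strat_def by blast
      then show "(if fst x = s \<and> snd (snd x) then pmf (act_rule \<sigma> s (fst (snd x))) a else 0) = 0"
        by (simp add: set_pmf_eq)
    qed
  qed simp_all
  then show ?thesis by simp
qed

lemma kuhn:
  fixes P :: "'s::finite \<Rightarrow> 'a::finite \<Rightarrow> 's \<Rightarrow> real"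
  assumes mdp: "is_MDP P" and val: "valid_strat P Mem \<sigma>"
  shows "\<exists>\<theta>\<in>ThM P. \<forall>t. ralive P \<sigma> \<iota> Ti t = phiM P \<iota> Ti \<theta> t"
proof -
  define a0 where "a0 s = (SOME a. a \<in> En P s)" for s
  have a0: "a0 s \<in> En P s" for s
  proof -
    have "En P s \<noteq> {}" using mdp by (simp add: is_MDP_def)
    then show ?thesis unfolding a0_def by (simp add: some_in_eq)
  qed
  define \<theta> where "\<theta> j = (case j of (t, s, a) \<Rightarrow>
      if Zs P \<sigma> \<iota> Ti t s = 0 then (if a = a0 s then 1 else 0)
      else Es P \<sigma> \<iota> Ti t s a / Zs P \<sigma> \<iota> Ti t s)" for j
  have Zpos: "Zs P \<sigma> \<iota> Ti t s \<noteq> 0 \<Longrightarrow> 0 < Zs P \<sigma> \<iota> Ti t s" for t s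
  proof -
    assume "Zs P \<sigma> \<iota> Ti t s \<noteq> 0"
    moreover have "0 \<le> Zs P \<sigma> \<iota> Ti t s" by (simp add: Zs_def)
    ultimately show "0 < Zs P \<sigma> \<iota> Ti t s" by linarith
  qed
  have E: "Es P \<sigma> \<iota> Ti t s a = \<theta> (t, s, a) * Zs P \<sigma> \<iota> Ti t s" for t s a
  proof (cases "Zs P \<sigma> \<iota> Ti t s = 0")
    case True
    then show ?thesis using Es_le_Zs[of P \<sigma> \<iota> Ti t s a] Es_nonneg[of P \<sigma> \<iota> Ti t s a] by simp
  next
    case False then show ?thesis by (simp add: \<theta>_def)
  qed
  have "\<theta> \<in> ThM P"
    unfolding ThM_def
  proof (intro CollectI conjI allI impI)
    fix j :: "nat \<times> 's \<times> 'a"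
    obtain t s a where j: "j = (t, s, a)" by (cases j) auto
    have "0 \<le> \<theta> j \<and> \<theta> j \<le> 1"
    proof (cases "Zs P \<sigma> \<iota> Ti t s = 0")
      case True then show ?thesis by (simp add: \<theta>_def j)
    next
      case False
      then have z: "0 < Zs P \<sigma> \<iota> Ti t s" by (rule Zpos)
      have "0 \<le> Es P \<sigma> \<iota> Ti t s a" "Es P \<sigma> \<iota> Ti t s a \<le> Zs P \<sigma> \<iota> Ti t s"
        by (rule Es_nonneg, rule Es_le_Zs)
      then show ?thesis using False z by (simp add: \<theta>_def j divide_le_eq_1)
    qed
    then show "0 \<le> \<theta> j" "\<theta> j \<le> 1" by auto
  next
    fix t s
    show "(\<Sum>a\<in>UNIV. \<theta> (t, s, a)) = 1"
    proof (cases "Zs P \<sigma> \<iota> Ti t s = 0")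
      case True then show ?thesis by (simp add: \<theta>_def)
    next
      case False then show ?thesis by (simp add: \<theta>_def sum_divide_distrib[symmetric] Es_sum)
    qed
  next
    fix t s a assume "a \<notin> En P s"
    then show "\<theta> (t, s, a) = 0" using a0[of s] Es_En[OF val] by (auto simp: \<theta>_def)
  qed
  then show ?thesis using ralive_phiM[OF mdp val E] by blast
qed

lemma cont_UM: "continuous_on UNIV (\<lambda>\<theta>. UM P \<iota> Ti \<theta> t s)"
proof (induction t arbitrary: s)
  case 0 then show ?case by simp
next
  case (Suc t)
  show ?case
  proof (cases "s \<in> Ti")
    case False
    then show ?thesis
      by (simp only: UM.simps if_False, intro continuous_on_sum continuous_on_mult
          Suc continuous_on_product_coordinates continuous_on_const)
  qed simp
qed

lemma cont_phiM: "continuous_on S (\<lambda>\<theta>. phiM P \<iota> Ti \<theta> t)"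
  unfolding phiM_def by (intro continuous_on_sum continuous_on_subset[OF cont_UM]) auto

lemma closed_eq_const:
  fixes f :: "'x::topological_space \<Rightarrow> real"
  assumes "continuous_on UNIV f"
  shows "closed {x. f x = c}"
  using closed_vimage[OF closed_singleton[of c] assms] by (simp add: vimage_def)

lemma compact_ThM:
  fixes P :: "'s::finite \<Rightarrow> 'a::finite \<Rightarrow> 's \<Rightarrow> real"
  shows "compact (ThM P)"
proof -
  have "ThM P = {\<theta>. \<forall>j. \<theta> j \<in> {0..1}} \<inter>
     ({\<theta>. \<forall>t s. (\<Sum>a\<in>UNIV. \<theta> (t, s, a)) = 1} \<inter> {\<theta>. \<forall>t s a. a \<notin> En P s \<longrightarrow> \<theta> (t, s, a) = 0})"
    unfolding ThM_def by auto
  moreover have "compact {\<theta> :: nat \<times> 's \<times> 'a \<Rightarrow> real. \<forall>j. \<theta> j \<in> {0..1}}"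
    by (rule compact_fun_all) simp
  moreover have "closed {\<theta> :: nat \<times> 's \<times> 'a \<Rightarrow> real. \<forall>t s. (\<Sum>a\<in>UNIV. \<theta> (t, s, a)) = 1}"
    by (intro closed_Collect_all closed_eq_const continuous_on_sum continuous_on_product_coordinates)
  moreover have "closed {\<theta> :: nat \<times> 's \<times> 'a \<Rightarrow> real. \<forall>t s a. a \<notin> En P s \<longrightarrow> \<theta> (t, s, a) = 0}"
    by (intro closed_Collect_all closed_Collect_imp closed_eq_const continuous_on_product_coordinates) auto
  ultimately show ?thesis by (simp only:) (intro compact_Int_closed closed_Int)
qed

lemma ThM_ne:
  assumes mdp: "is_MDP P"
  shows "ThM P \<noteq> {}"
proof -
  define a0 where "a0 s = (SOME a. a \<in> En P s)" for s
  have a0: "a0 s \<in> En P s" for s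
  proof -
    have "En P s \<noteq> {}" using mdp by (simp add: is_MDP_def)
    then show ?thesis unfolding a0_def by (simp add: some_in_eq)
  qed
  have "(\<lambda>(t, s, a). if a = a0 s then 1 else 0) \<in> ThM P"
    unfolding ThM_def using a0 by auto
  then show ?thesis by blast
qed


type_synonym ('s,'a) idxN = "(nat + ('s \<times> nat \<times> 'a)) + (nat \<times> 's \<times> 'a \<times> 's \<times> nat)"

definition ini :: "((nat + ('s \<times> nat \<times> 'a)) + (nat \<times> 's \<times> 'a \<times> 's \<times> nat) \<Rightarrow> real) \<Rightarrow> nat \<Rightarrow> real" where
  "ini \<theta> m = \<theta> (Inl (Inl m))"
definition ac :: "((nat + ('s \<times> nat \<times> 'a)) + (nat \<times> 's \<times> 'a \<times> 's \<times> nat) \<Rightarrow> real) \<Rightarrow> 's \<Rightarrow> nat \<Rightarrow> 'a \<Rightarrow> real" where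
  "ac \<theta> s m a = \<theta> (Inl (Inr (s, m, a)))"
definition up :: "((nat + ('s \<times> nat \<times> 'a)) + (nat \<times> 's \<times> 'a \<times> 's \<times> nat) \<Rightarrow> real) \<Rightarrow> nat \<Rightarrow> 's \<Rightarrow> 'a \<Rightarrow> 's \<Rightarrow> nat \<Rightarrow> real" where
  "up \<theta> m s a s' m' = \<theta> (Inr (m, s, a, s', m'))"

definition ThN :: "('s::finite \<Rightarrow> 'a::finite \<Rightarrow> 's \<Rightarrow> real) \<Rightarrow> nat \<Rightarrow> ((nat + ('s \<times> nat \<times> 'a)) + (nat \<times> 's \<times> 'a \<times> 's \<times> nat) \<Rightarrow> real) set" where
  "ThN P n = {\<theta>. (\<forall>j. 0 \<le> \<theta> j \<and> \<theta> j \<le> 1) \<and> (\<forall>m. n \<le> m \<longrightarrow> ini \<theta> m = 0) \<and> (\<Sum>m<n. ini \<theta> m) = 1 \<and>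
     (\<forall>s m. (\<Sum>a\<in>UNIV. ac \<theta> s m a) = 1) \<and> (\<forall>s m a. a \<notin> En P s \<longrightarrow> ac \<theta> s m a = 0) \<and>
     (\<forall>m s a s'. (\<Sum>m'<n. up \<theta> m s a s' m') = 1) \<and> (\<forall>m s a s' m'. n \<le> m' \<longrightarrow> up \<theta> m s a s' m' = 0)}"

definition mk_fin :: "((nat + ('s \<times> nat \<times> 'a)) + (nat \<times> 's \<times> 'a \<times> 's \<times> nat) \<Rightarrow> real) \<Rightarrow> ('s, 'a) strat" where
  "mk_fin \<theta> = \<lparr>init_mem = embed_pmf (ini \<theta>), act_rule = (\<lambda>s m. embed_pmf (ac \<theta> s m)),
                upd_rule = (\<lambda>m s a s'. embed_pmf (up \<theta> m s a s'))\<rparr>"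

fun UNf :: "('s::finite \<Rightarrow> 'a::finite \<Rightarrow> 's \<Rightarrow> real) \<Rightarrow> 's \<Rightarrow> 's set \<Rightarrow> nat \<Rightarrow> ((nat + ('s \<times> nat \<times> 'a)) + (nat \<times> 's \<times> 'a \<times> 's \<times> nat) \<Rightarrow> real) \<Rightarrow> nat \<Rightarrow> 's \<Rightarrow> nat \<Rightarrow> real" where
  "UNf P \<iota> Ti n \<theta> 0 s m = (if s = \<iota> \<and> \<iota> \<notin> Ti then ini \<theta> m else 0)"
| "UNf P \<iota> Ti n \<theta> (Suc t) s' m' = (if s' \<in> Ti then 0 else
     (\<Sum>s\<in>UNIV. \<Sum>m<n. \<Sum>a\<in>UNIV. UNf P \<iota> Ti n \<theta> t s m * ac \<theta> s m a * P s a s' * up \<theta> m s a s' m'))"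

definition phiN where "phiN P \<iota> Ti n \<theta> t = (\<Sum>s\<in>UNIV. \<Sum>m<n. UNf P \<iota> Ti n \<theta> t s m)"

lemma ThN_pmfs:
  fixes P :: "'s::finite \<Rightarrow> 'a::finite \<Rightarrow> 's \<Rightarrow> real"
  assumes "\<theta> \<in> ThN P n"
  shows "pmf (init_mem (mk_fin \<theta>)) = ini \<theta>" "set_pmf (init_mem (mk_fin \<theta>)) \<subseteq> {..<n}"
    "pmf (act_rule (mk_fin \<theta>) s m) = ac \<theta> s m" "set_pmf (act_rule (mk_fin \<theta>) s m) \<subseteq> En P s"
    "pmf (upd_rule (mk_fin \<theta>) m s a s') = up \<theta> m s a s'" "set_pmf (upd_rule (mk_fin \<theta>) m s a s') \<subseteq> {..<n}"
proof -
  have th: "\<forall>j. 0 \<le> \<theta> j \<and> \<theta> j \<le> 1" "\<forall>m. n \<le> m \<longrightarrow> ini \<theta> m = 0" "(\<Sum>m<n. ini \<theta> m) = 1"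
     "\<forall>s m. (\<Sum>a\<in>UNIV. ac \<theta> s m a) = 1" "\<forall>s m a. a \<notin> En P s \<longrightarrow> ac \<theta> s m a = 0"
     "\<forall>m s a s'. (\<Sum>m'<n. up \<theta> m s a s' m') = 1" "\<forall>m s a s' m'. n \<le> m' \<longrightarrow> up \<theta> m s a s' m' = 0"
    using assms unfolding ThN_def by auto
  have i: "\<And>x. 0 \<le> ini \<theta> x" and a: "\<And>x. 0 \<le> ac \<theta> s m x" and u: "\<And>x. 0 \<le> up \<theta> m s a s' x"
    using th(1) by (auto simp: ini_def ac_def up_def)
  show "pmf (init_mem (mk_fin \<theta>)) = ini \<theta>"
    unfolding mk_fin_def by simp (rule pmf_embed_nat(1)[of _ n], use i th in auto)
  have "set_pmf (init_mem (mk_fin \<theta>)) = {x. ini \<theta> x \<noteq> 0}"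
    unfolding mk_fin_def by simp (rule pmf_embed_nat(2)[of _ n], use i th in auto)
  then show "set_pmf (init_mem (mk_fin \<theta>)) \<subseteq> {..<n}"
    using th by (auto simp: not_less)
  show "pmf (act_rule (mk_fin \<theta>) s m) = ac \<theta> s m"
    unfolding mk_fin_def by simp (rule pmf_embed_finite(1), use a th in auto)
  have "set_pmf (act_rule (mk_fin \<theta>) s m) = {x. ac \<theta> s m x \<noteq> 0}"
    unfolding mk_fin_def by simp (rule pmf_embed_finite(2), use a th in auto)
  then show "set_pmf (act_rule (mk_fin \<theta>) s m) \<subseteq> En P s"
    using th(5) by blast
  show "pmf (upd_rule (mk_fin \<theta>) m s a s') = up \<theta> m s a s'"
    unfolding mk_fin_def by simp (rule pmf_embed_nat(1)[of _ n], use u th in auto)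
  have seteq: "set_pmf (upd_rule (mk_fin \<theta>) m s a s') = {x. up \<theta> m s a s' x \<noteq> 0}"
    unfolding mk_fin_def by simp (rule pmf_embed_nat(2)[of _ n], use u th in auto)
  show "set_pmf (upd_rule (mk_fin \<theta>) m s a s') \<subseteq> {..<n}"
  proof
    fix x assume "x \<in> set_pmf (upd_rule (mk_fin \<theta>) m s a s')"
    then have "up \<theta> m s a s' x \<noteq> 0" using seteq by simp
    show "x \<in> {..<n}"
    proof (rule ccontr)
      assume "x \<notin> {..<n}"
      then have "n \<le> x" by simp
      then have "up \<theta> m s a s' x = 0" using th(7) by blast
      then show False using \<open>up \<theta> m s a s' x \<noteq> 0\<close> by simp
    qed
  qed
qed

lemma valid_fin:
  fixes P :: "'s::finite \<Rightarrow> 'a::finite \<Rightarrow> 's \<Rightarrow> real"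
  assumes "\<theta> \<in> ThN P n"
  shows "valid_strat P {..<n} (mk_fin \<theta>)"
  using ThN_pmfs[OF assms] unfolding valid_strat_def by auto

lemma pmf_agent_step:
  fixes P :: "'s::finite \<Rightarrow> 'a::finite \<Rightarrow> 's \<Rightarrow> real"
  shows "pmf (agent_step P \<sigma> (s, m)) (s', m') =
    (\<Sum>a\<in>UNIV. pmf (act_rule \<sigma> s m) a * pmf (trans_pmf P s a) s' * pmf (upd_rule \<sigma> m s a s') m')"
proof -
  have inner: "pmf (bind_pmf (trans_pmf P s a) (\<lambda>s''. bind_pmf (upd_rule \<sigma> m s a s'') (\<lambda>m''. return_pmf (s'', m'')))) (s', m')
     = pmf (trans_pmf P s a) s' * pmf (upd_rule \<sigma> m s a s') m'" for a
  proof -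
    have "pmf (bind_pmf (trans_pmf P s a) (\<lambda>s''. bind_pmf (upd_rule \<sigma> m s a s'') (\<lambda>m''. return_pmf (s'', m'')))) (s', m')
      = measure_pmf.expectation (trans_pmf P s a) (\<lambda>s''. pmf (map_pmf (Pair s'') (upd_rule \<sigma> m s a s'')) (s', m'))"
      by (simp add: pmf_bind map_pmf_def)
    also have "\<dots> = (\<Sum>s''\<in>UNIV. pmf (map_pmf (Pair s'') (upd_rule \<sigma> m s a s'')) (s', m') * pmf (trans_pmf P s a) s'')"
      by (rule integral_measure_pmf_real) auto
    also have "\<dots> = (\<Sum>s''\<in>UNIV. (if s'' = s' then pmf (upd_rule \<sigma> m s a s') m' else 0) * pmf (trans_pmf P s a) s'')"
    proof (rule sum.cong)
      fix s'' show "pmf (map_pmf (Pair s'') (upd_rule \<sigma> m s a s'')) (s', m') * pmf (trans_pmf P s a) s'' =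
         (if s'' = s' then pmf (upd_rule \<sigma> m s a s') m' else 0) * pmf (trans_pmf P s a) s''"
      proof (cases "s'' = s'")
        case True then show ?thesis by (simp add: pmf_map_inj' inj_on_def)
      next
        case False
        have "pmf (map_pmf (Pair s'') (upd_rule \<sigma> m s a s'')) (s', m') = 0"
          using False by (auto simp: pmf_eq_0_set_pmf)
        then show ?thesis using False by simp
      qed
    qed simp
    also have "\<dots> = pmf (trans_pmf P s a) s' * pmf (upd_rule \<sigma> m s a s') m'"
      by (simp add: if_distrib[of "\<lambda>z. z * _"] cong: if_cong)
    finally show ?thesis .
  qed
  have "agent_step P \<sigma> (s,m) = bind_pmf (act_rule \<sigma> s m) (\<lambda>a. bind_pmf (trans_pmf P s a)
      (\<lambda>s''. bind_pmf (upd_rule \<sigma> m s a s'') (\<lambda>m''. return_pmf (s'', m''))))"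
    by (simp add: agent_step_def)
  then have "pmf (agent_step P \<sigma> (s, m)) (s', m') = measure_pmf.expectation (act_rule \<sigma> s m)
     (\<lambda>a. pmf (bind_pmf (trans_pmf P s a) (\<lambda>s''. bind_pmf (upd_rule \<sigma> m s a s'') (\<lambda>m''. return_pmf (s'', m'')))) (s', m'))"
    by (simp only: pmf_bind)
  also have "\<dots> = measure_pmf.expectation (act_rule \<sigma> s m)
     (\<lambda>a. pmf (trans_pmf P s a) s' * pmf (upd_rule \<sigma> m s a s') m')"
    by (simp only: inner)
  also have "\<dots> = (\<Sum>a\<in>UNIV. pmf (trans_pmf P s a) s' * pmf (upd_rule \<sigma> m s a s') m' * pmf (act_rule \<sigma> s m) a)"
    by (rule integral_measure_pmf_real) auto
  finally show ?thesis by (simp add: mult_ac)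
qed

lemma step_fin:
  fixes P :: "'s::finite \<Rightarrow> 'a::finite \<Rightarrow> 's \<Rightarrow> real"
  assumes mdp: "is_MDP P" and th: "\<theta> \<in> ThN P n"
  shows "pmf (agent_step P (mk_fin \<theta>) (s, m)) (s', m') = (\<Sum>a\<in>UNIV. ac \<theta> s m a * P s a s' * up \<theta> m s a s' m')"
  unfolding pmf_agent_step ThN_pmfs[OF th]
proof (rule sum.cong)
  fix a
  show "ac \<theta> s m a * pmf (trans_pmf P s a) s' * up \<theta> m s a s' m' = ac \<theta> s m a * P s a s' * up \<theta> m s a s' m'"
  proof (cases "a \<in> En P s")
    case True then show ?thesis by (simp add: pmf_trans[OF mdp])
  next
    case False then have "ac \<theta> s m a = 0" using th unfolding ThN_def by auto
    then show ?thesis by simp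
  qed
qed simp

lemma pmf_aY_fin:
  fixes P :: "'s::finite \<Rightarrow> 'a::finite \<Rightarrow> 's \<Rightarrow> real"
  assumes mdp: "is_MDP P" and th: "\<theta> \<in> ThN P n"
  shows "pmf (aY P (mk_fin \<theta>) \<iota> Ti t) (s, m, True) = UNf P \<iota> Ti n \<theta> t s m"
proof (induction t arbitrary: s m)
  case 0
  have "(\<lambda>m'. (\<iota>, m', \<iota> \<notin> Ti)) -` {(s, m, True)} = (if s = \<iota> \<and> \<iota> \<notin> Ti then {m} else {})" by auto
  then show ?case by (simp add: pmf_map measure_pmf_single ThN_pmfs[OF th])
next
  case (Suc t)
  let ?Y = "aY P (mk_fin \<theta>) \<iota> Ti t"
  define K where "K x = map_pmf (\<lambda>y. (fst y, snd y, snd (snd x) \<and> fst y \<notin> Ti)) (agent_step P (mk_fin \<theta>) (fst x, fst (snd x)))"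
    for x :: "'s \<times> nat \<times> bool"
  have pK: "pmf (K x) (s, m, True) = (if snd (snd x) \<and> s \<notin> Ti then pmf (agent_step P (mk_fin \<theta>) (fst x, fst (snd x))) (s, m) else 0)" for x
  proof -
    have "(\<lambda>y. (fst y, snd y, snd (snd x) \<and> fst y \<notin> Ti)) -` {(s, m, True)} = (if snd (snd x) \<and> s \<notin> Ti then {(s, m)} else {})"
      by auto
    then show ?thesis by (simp add: K_def pmf_map measure_pmf_single)
  qed
  have "pmf (aY P (mk_fin \<theta>) \<iota> Ti (Suc t)) (s, m, True) = measure_pmf.expectation ?Y (\<lambda>x. pmf (K x) (s, m, True))"
    by (simp add: pmf_bind K_def)
  also have "\<dots> = (\<Sum>x\<in>UNIV \<times> {..<n} \<times> UNIV. pmf (K x) (s, m, True) * pmf ?Y x)"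
  proof (rule integral_measure_pmf_real)
    fix x assume "x \<in> set_pmf ?Y"
    then have "fst (snd x) \<in> {..<n}" using set_aY[OF valid_fin[OF th]] by blast
    then show "x \<in> UNIV \<times> {..<n} \<times> UNIV" by (cases x) auto
  qed simp
  also have "\<dots> = (\<Sum>s0\<in>UNIV. \<Sum>m0<n. \<Sum>b\<in>UNIV. pmf (K (s0, m0, b)) (s, m, True) * pmf ?Y (s0, m0, b))"
    by (simp add: sum.cartesian_product)
  also have "\<dots> = (if s \<in> Ti then 0 else
       (\<Sum>s0\<in>UNIV. \<Sum>m0<n. pmf (agent_step P (mk_fin \<theta>) (s0, m0)) (s, m) * UNf P \<iota> Ti n \<theta> t s0 m0))"
    by (simp add: pK UNIV_bool Suc)
  also have "\<dots> = UNf P \<iota> Ti n \<theta> (Suc t) s m"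
    by (simp add: step_fin[OF mdp th] sum_distrib_left sum_distrib_right mult_ac)
  finally show ?case .
qed

lemma ralive_fin:
  fixes P :: "'s::finite \<Rightarrow> 'a::finite \<Rightarrow> 's \<Rightarrow> real"
  assumes mdp: "is_MDP P" and th: "\<theta> \<in> ThN P n"
  shows "ralive P (mk_fin \<theta>) \<iota> Ti t = phiN P \<iota> Ti n \<theta> t"
proof -
  let ?Y = "aY P (mk_fin \<theta>) \<iota> Ti t"
  have "ralive P (mk_fin \<theta>) \<iota> Ti t = measure_pmf.prob ?Y ({x. snd (snd x)} \<inter> set_pmf ?Y)"
    by (simp add: ralive_def measure_Int_set_pmf)
  also have "{x. snd (snd x)} \<inter> set_pmf ?Y = (UNIV \<times> {..<n} \<times> {True}) \<inter> set_pmf ?Y"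
  proof (rule set_eqI)
    fix x :: "'s \<times> nat \<times> bool"
    show "x \<in> {x. snd (snd x)} \<inter> set_pmf ?Y \<longleftrightarrow> x \<in> (UNIV \<times> {..<n} \<times> {True}) \<inter> set_pmf ?Y"
    proof (cases "x \<in> set_pmf ?Y")
      case True
      then have "fst (snd x) \<in> {..<n}" using set_aY[OF valid_fin[OF th]] by blast
      then show ?thesis by (cases x) auto
    qed simp
  qed
  also have "measure_pmf.prob ?Y \<dots> = measure_pmf.prob ?Y (UNIV \<times> {..<n} \<times> {True})"
    by (simp add: measure_Int_set_pmf)
  also have "\<dots> = (\<Sum>x\<in>UNIV \<times> {..<n} \<times> {True}. pmf ?Y x)"
    by (simp add: measure_measure_pmf_finite)
  also have "\<dots> = phiN P \<iota> Ti n \<theta> t"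
    by (simp add: sum.cartesian_product' phiN_def pmf_aY_fin[OF mdp th])
  finally show ?thesis .
qed

lemma rename_fin:
  fixes P :: "'s::finite \<Rightarrow> 'a::finite \<Rightarrow> 's \<Rightarrow> real"
  assumes mdp: "is_MDP P" and val: "valid_strat P Mem \<sigma>" and fin: "finite Mem" and card: "card Mem \<le> n"
  shows "\<exists>\<theta>\<in>ThN P n. \<forall>t. ralive P \<sigma> \<iota> Ti t = phiN P \<iota> Ti n \<theta> t"
proof -
  obtain h where h: "bij_betw h Mem {0..<card Mem}" using ex_bij_betw_finite_nat[OF fin] by blast
  have hinj: "inj_on h Mem" and himg: "h ` Mem \<subseteq> {..<n}" using h card by (auto simp: bij_betw_def)
  have "set_pmf (init_mem \<sigma>) \<subseteq> Mem" using val unfolding valid_strat_def by auto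
  then obtain m0 where m0: "m0 \<in> Mem" using set_pmf_not_empty[of "init_mem \<sigma>"] by blast
  define g where "g m = (if m \<in> h ` Mem then the_inv_into Mem h m else m0)" for m
  have gh: "g (h x) = x" if "x \<in> Mem" for x using that hinj by (simp add: g_def the_inv_into_f_f)
  have gM: "g m \<in> Mem" for m using m0 hinj by (auto simp: g_def the_inv_into_into)
  have vi: "set_pmf (init_mem \<sigma>) \<subseteq> Mem" and va: "\<And>s m. m \<in> Mem \<Longrightarrow> set_pmf (act_rule \<sigma> s m) \<subseteq> En P s"
    and vu: "\<And>s m a s'. m \<in> Mem \<Longrightarrow> set_pmf (upd_rule \<sigma> m s a s') \<subseteq> Mem"
    using val unfolding valid_strat_def by auto
  define \<theta> :: "(nat + ('s \<times> nat \<times> 'a)) + (nat \<times> 's \<times> 'a \<times> 's \<times> nat) \<Rightarrow> real" where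
    "\<theta> j = (case j of Inl (Inl m) \<Rightarrow> pmf (map_pmf h (init_mem \<sigma>)) m
       | Inl (Inr (s, m, a)) \<Rightarrow> pmf (act_rule \<sigma> s (g m)) a
       | Inr (m, s, a, s', m') \<Rightarrow> pmf (map_pmf h (upd_rule \<sigma> (g m) s a s')) m')" for j
  have ini_eq: "ini \<theta> = pmf (map_pmf h (init_mem \<sigma>))" by (simp add: fun_eq_iff ini_def \<theta>_def)
  have ac_eq: "ac \<theta> s m = pmf (act_rule \<sigma> s (g m))" for s m by (simp add: fun_eq_iff ac_def \<theta>_def)
  have up_eq: "up \<theta> m s a s' = pmf (map_pmf h (upd_rule \<sigma> (g m) s a s'))" for m s a s'
    by (simp add: fun_eq_iff up_def \<theta>_def)
  have si: "set_pmf (map_pmf h (init_mem \<sigma>)) \<subseteq> {..<n}" using vi himg by auto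
  have su: "set_pmf (map_pmf h (upd_rule \<sigma> (g m) s a s')) \<subseteq> {..<n}" for m s a s'
    using vu[of "g m" s a s'] gM[of m] himg by fastforce
  have th: "\<theta> \<in> ThN P n"
    unfolding ThN_def
  proof (intro CollectI conjI allI impI)
    fix j show "0 \<le> \<theta> j" "\<theta> j \<le> 1" by (auto simp: \<theta>_def pmf_le_1 split: sum.splits prod.splits)
  next
    fix m :: nat assume "n \<le> m"
    then show "ini \<theta> m = 0" using si by (auto simp: ini_eq pmf_eq_0_set_pmf)
  next
    show "(\<Sum>m<n. ini \<theta> m) = 1" unfolding ini_eq by (rule sum_pmf_eq_1[OF _ si]) simp
  next
    fix s m show "(\<Sum>a\<in>UNIV. ac \<theta> s m a) = 1" unfolding ac_eq by (rule sum_pmf_eq_1) auto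
  next
    fix s m a assume "a \<notin> En P s"
    then show "ac \<theta> s m a = 0" using va[OF gM] by (auto simp: ac_eq pmf_eq_0_set_pmf)
  next
    fix m s a s' show "(\<Sum>m'<n. up \<theta> m s a s' m') = 1" unfolding up_eq by (rule sum_pmf_eq_1[OF _ su]) simp
  next
    fix m s a s' m' assume "n \<le> m'"
    then show "up \<theta> m s a s' m' = 0" using su[of m s a s'] by (auto simp: up_eq pmf_eq_0_set_pmf)
  qed
  have mi: "init_mem (mk_fin \<theta>) = map_pmf h (init_mem \<sigma>)" by (simp add: mk_fin_def ini_eq embed_pmf_pmf)
  have ma: "act_rule (mk_fin \<theta>) s m = act_rule \<sigma> s (g m)" for s m by (simp add: mk_fin_def ac_eq embed_pmf_pmf)
  have mu: "upd_rule (mk_fin \<theta>) m s a s' = map_pmf h (upd_rule \<sigma> (g m) s a s')" for m s a s'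
    by (simp add: mk_fin_def up_eq embed_pmf_pmf)
  define R where "R x = (fst x, h (fst (snd x)), snd (snd x))" for x :: "'s \<times> nat \<times> bool"
  have step: "agent_step P (mk_fin \<theta>) (s, h m) = map_pmf (\<lambda>y. (fst y, h (snd y))) (agent_step P \<sigma> (s, m))"
    if "m \<in> Mem" for s m
    using that by (simp add: agent_step_def ma mu gh map_bind_pmf bind_map_pmf)
  have Yeq: "aY P (mk_fin \<theta>) \<iota> Ti t = map_pmf R (aY P \<sigma> \<iota> Ti t)" for t
  proof (induction t)
    case 0 then show ?case by (simp add: mi map_pmf_comp R_def)
  next
    case (Suc t)
    show ?case
      unfolding aY.simps Suc bind_map_pmf map_bind_pmf
    proof (rule bind_pmf_cong)
      fix x assume "x \<in> set_pmf (aY P \<sigma> \<iota> Ti t)"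
      then have "fst (snd x) \<in> Mem" using set_aY[OF val] by blast
      then show "map_pmf (\<lambda>y. (fst y, snd y, snd (snd (R x)) \<and> fst y \<notin> Ti)) (agent_step P (mk_fin \<theta>) (fst (R x), fst (snd (R x)))) =
          map_pmf R (map_pmf (\<lambda>y. (fst y, snd y, snd (snd x) \<and> fst y \<notin> Ti)) (agent_step P \<sigma> (fst x, fst (snd x))))"
        by (simp add: R_def step map_pmf_comp)
    qed simp
  qed
  have "ralive P \<sigma> \<iota> Ti t = phiN P \<iota> Ti n \<theta> t" for t
  proof -
    have "ralive P \<sigma> \<iota> Ti t = ralive P (mk_fin \<theta>) \<iota> Ti t"
      by (simp add: ralive_def Yeq measure_map_pmf vimage_def R_def)
    then show ?thesis using ralive_fin[OF mdp th] by simp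
  qed
  then show ?thesis using th by blast
qed

lemma cont_UNf: "continuous_on UNIV (\<lambda>\<theta>. UNf P \<iota> Ti n \<theta> t s m)"
proof (induction t arbitrary: s m)
  case 0 show ?case
  proof (cases "s = \<iota> \<and> \<iota> \<notin> Ti")
    case True then show ?thesis by (simp add: ini_def continuous_on_product_coordinates)
  next
    case False then show ?thesis by (simp only: UNf.simps False if_False continuous_on_const)
  qed
next
  case (Suc t)
  show ?case
  proof (cases "s \<in> Ti")
    case False
    then show ?thesis
      by (simp only: UNf.simps if_False ac_def up_def, intro continuous_on_sum continuous_on_mult
          Suc continuous_on_product_coordinates continuous_on_const)
  qed simp
qed

lemma cont_phiN: "continuous_on S (\<lambda>\<theta>. phiN P \<iota> Ti n \<theta> t)"
  unfolding phiN_def by (intro continuous_on_sum continuous_on_subset[OF cont_UNf]) auto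


lemma compact_ThN:
  fixes P :: "'s::finite \<Rightarrow> 'a::finite \<Rightarrow> 's \<Rightarrow> real"
  shows "compact (ThN P n)"
proof -
  have "ThN P n = {\<theta>. \<forall>j. \<theta> j \<in> {0..1}} \<inter>
     ({\<theta>. \<forall>m. n \<le> m \<longrightarrow> \<theta> (Inl (Inl m)) = 0} \<inter> {\<theta>. (\<Sum>m<n. \<theta> (Inl (Inl m))) = 1} \<inter>
      {\<theta>. \<forall>s m. (\<Sum>a\<in>UNIV. \<theta> (Inl (Inr (s, m, a)))) = 1} \<inter> {\<theta>. \<forall>s m a. a \<notin> En P s \<longrightarrow> \<theta> (Inl (Inr (s, m, a))) = 0} \<inter>
      {\<theta>. \<forall>m s a s'. (\<Sum>m'<n. \<theta> (Inr (m, s, a, s', m'))) = 1} \<inter> {\<theta>. \<forall>m s a s' m'. n \<le> m' \<longrightarrow> \<theta> (Inr (m, s, a, s', m')) = 0})"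
    unfolding ThN_def ini_def ac_def up_def by auto
  moreover have "compact {\<theta> :: ('s,'a) idxN \<Rightarrow> real. \<forall>j. \<theta> j \<in> {0..1}}"
    by (rule compact_fun_all) simp
  moreover have "closed ({\<theta> :: ('s,'a) idxN \<Rightarrow> real. \<forall>m. n \<le> m \<longrightarrow> \<theta> (Inl (Inl m)) = 0} \<inter> {\<theta>. (\<Sum>m<n. \<theta> (Inl (Inl m))) = 1} \<inter>
      {\<theta>. \<forall>s m. (\<Sum>a\<in>UNIV. \<theta> (Inl (Inr (s, m, a)))) = 1} \<inter> {\<theta>. \<forall>s m a. a \<notin> En P s \<longrightarrow> \<theta> (Inl (Inr (s, m, a))) = 0} \<inter>
      {\<theta>. \<forall>m s a s'. (\<Sum>m'<n. \<theta> (Inr (m, s, a, s', m'))) = 1} \<inter> {\<theta>. \<forall>m s a s' m'. n \<le> m' \<longrightarrow> \<theta> (Inr (m, s, a, s', m')) = 0})"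
    by (intro closed_Int closed_Collect_all closed_Collect_imp closed_eq_const continuous_on_sum
        continuous_on_product_coordinates) auto
  ultimately show ?thesis by (simp only:) (rule compact_Int_closed)
qed

lemma ThN_ne:
  fixes P :: "'s::finite \<Rightarrow> 'a::finite \<Rightarrow> 's \<Rightarrow> real"
  assumes mdp: "is_MDP P" and n: "1 \<le> n"
  shows "ThN P n \<noteq> {}"
proof -
  define a0 where "a0 s = (SOME a. a \<in> En P s)" for s
  have a0: "a0 s \<in> En P s" for s
  proof -
    have "En P s \<noteq> {}" using mdp by (simp add: is_MDP_def)
    then show ?thesis unfolding a0_def by (simp add: some_in_eq)
  qed
  define \<theta> :: "(nat + ('s \<times> nat \<times> 'a)) + (nat \<times> 's \<times> 'a \<times> 's \<times> nat) \<Rightarrow> real" where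
    "\<theta> j = (case j of Inl (Inl m) \<Rightarrow> (if m = 0 then 1 else 0)
       | Inl (Inr (s, m, a)) \<Rightarrow> (if a = a0 s then 1 else 0)
       | Inr (m, s, a, s', m') \<Rightarrow> (if m' = 0 then 1 else 0))" for j
  have "\<theta> \<in> ThN P n"
    unfolding ThN_def using n a0 
    by (auto simp: \<theta>_def ini_def ac_def up_def split: sum.splits prod.splits)
  then show ?thesis by blast
qed


lemma exp_eq_prod:
  fixes P :: "'s::finite \<Rightarrow> 'a::finite \<Rightarrow> 's \<Rightarrow> real"
  shows "exp_MHit P k iota T \<pi> = (\<Sum>t. ennreal (\<Prod>i<k. ralive P (\<pi> i) (iota i) (T i) t))"
proof -
  have "exp_MHit P k iota T \<pi> = (\<Sum>t. ennreal (snh P k iota T \<pi> t))"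
    unfolding exp_MHit_def
  proof (rule exp_seq_lemma[of "snh P k iota T \<pi>" "prob_MHit_eq P k iota T \<pi>"])
    show "0 \<le> snh P k iota T \<pi> t" for t unfolding snh_def by (rule measure_nonneg)
    show "0 \<le> prob_MHit_eq P k iota T \<pi> t" for t unfolding prob_MHit_eq_def by (rule measure_nonneg)
    show "prob_MHit_eq P k iota T \<pi> 0 = 1 - snh P k iota T \<pi> 0" by (rule prob_MHit_eq_0)
    show "prob_MHit_eq P k iota T \<pi> (Suc t) = snh P k iota T \<pi> t - snh P k iota T \<pi> (Suc t)" for t
      by (rule prob_MHit_eq_Suc)
  qed
  moreover have "snh P k iota T \<pi> t = (\<Prod>i<k. ralive P (\<pi> i) (iota i) (T i) t)" for t
    unfolding snh_def by (rule snh_factor)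
  ultimately show ?thesis by simp
qed

lemma opt_from_param:
  fixes P :: "'s::finite \<Rightarrow> 'a::finite \<Rightarrow> 's \<Rightarrow> real"
    and \<Theta> :: "'x::metric_space set" and \<phi> :: "nat \<Rightarrow> 'x \<Rightarrow> nat \<Rightarrow> real"
    and Good :: "('s, 'a) strat \<Rightarrow> bool"
  assumes cpt: "compact \<Theta>" and ne: "\<Theta> \<noteq> {}"
    and cont: "\<And>i t. continuous_on \<Theta> (\<lambda>\<theta>. \<phi> i \<theta> t)"
    and a: "\<And>i \<sigma>. Good \<sigma> \<Longrightarrow> \<exists>\<theta>\<in>\<Theta>. \<forall>t. ralive P \<sigma> (iota i) (T i) t = \<phi> i \<theta> t"
    and b: "\<And>i \<theta>. \<theta> \<in> \<Theta> \<Longrightarrow> \<exists>\<sigma>. Good \<sigma> \<and> (\<forall>t. ralive P \<sigma> (iota i) (T i) t = \<phi> i \<theta> t)"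
  shows "\<exists>\<pi>. (\<forall>i<k. Good (\<pi> i)) \<and>
     exp_MHit P k iota T \<pi> = (INF \<pi>'\<in>{\<pi>'. \<forall>i<k. Good (\<pi>' i)}. exp_MHit P k iota T \<pi>')"
proof -
  have nonneg: "0 \<le> \<phi> i \<theta> t" if th0: "\<theta> \<in> \<Theta>" for i \<theta> t
  proof -
    obtain \<sigma> where \<sigma>: "\<forall>t. ralive P \<sigma> (iota i) (T i) t = \<phi> i \<theta> t" using b[OF th0] by blast
    have "0 \<le> ralive P \<sigma> (iota i) (T i) t" unfolding ralive_def by (rule measure_nonneg)
    then show ?thesis using \<sigma> by simp
  qed
  have ex: "\<exists>\<theta>. (\<forall>i. \<theta> i \<in> \<Theta>) \<and> (\<forall>\<theta>'. (\<forall>i. \<theta>' i \<in> \<Theta>) \<longrightarrow>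
     (\<Sum>t. ennreal (\<Prod>i<k. \<phi> i (\<theta> i) t)) \<le> (\<Sum>t. ennreal (\<Prod>i<k. \<phi> i (\<theta>' i) t)))"
    by (rule exists_min[OF cpt ne cont nonneg])
  then obtain \<theta> where thmin: "(\<forall>i. \<theta> i \<in> \<Theta>) \<and> (\<forall>\<theta>'. (\<forall>i. \<theta>' i \<in> \<Theta>) \<longrightarrow>
     (\<Sum>t. ennreal (\<Prod>i<k. \<phi> i (\<theta> i) t)) \<le> (\<Sum>t. ennreal (\<Prod>i<k. \<phi> i (\<theta>' i) t)))" ..
  have th: "\<forall>i. \<theta> i \<in> \<Theta>" using thmin by (rule conjunct1)
  have min: "\<forall>\<theta>'. (\<forall>i. \<theta>' i \<in> \<Theta>) \<longrightarrow>
     (\<Sum>t. ennreal (\<Prod>i<k. \<phi> i (\<theta> i) t)) \<le> (\<Sum>t. ennreal (\<Prod>i<k. \<phi> i (\<theta>' i) t))"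
    using thmin by (rule conjunct2)
  define \<pi> where "\<pi> i = (SOME \<sigma>. Good \<sigma> \<and> (\<forall>t. ralive P \<sigma> (iota i) (T i) t = \<phi> i (\<theta> i) t))" for i
  have \<pi>: "Good (\<pi> i) \<and> (\<forall>t. ralive P (\<pi> i) (iota i) (T i) t = \<phi> i (\<theta> i) t)" for i
  proof -
    have "\<exists>\<sigma>. Good \<sigma> \<and> (\<forall>t. ralive P \<sigma> (iota i) (T i) t = \<phi> i (\<theta> i) t)"
      using b[of "\<theta> i" i] th by blast
    then show ?thesis unfolding \<pi>_def by (rule someI_ex)
  qed
  have e\<pi>: "exp_MHit P k iota T \<pi> = (\<Sum>t. ennreal (\<Prod>i<k. \<phi> i (\<theta> i) t))"
  proof -
    have "exp_MHit P k iota T \<pi> = (\<Sum>t. ennreal (\<Prod>i<k. ralive P (\<pi> i) (iota i) (T i) t))"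
      by (rule exp_eq_prod)
    also have "\<dots> = (\<Sum>t. ennreal (\<Prod>i<k. \<phi> i (\<theta> i) t))"
      by (rule suminf_cong, rule arg_cong[where f = ennreal], rule prod.cong) (simp_all add: \<pi>)
    finally show ?thesis .
  qed
  have le: "exp_MHit P k iota T \<pi> \<le> exp_MHit P k iota T \<pi>'" if good': "\<forall>i<k. Good (\<pi>' i)" for \<pi>'
  proof -
    obtain x0 where x0: "x0 \<in> \<Theta>" using ne by blast
    have "\<forall>i. \<exists>\<theta>i. \<theta>i \<in> \<Theta> \<and> (i < k \<longrightarrow> (\<forall>t. ralive P (\<pi>' i) (iota i) (T i) t = \<phi> i \<theta>i t))"
    proof
      fix i
      show "\<exists>\<theta>i. \<theta>i \<in> \<Theta> \<and> (i < k \<longrightarrow> (\<forall>t. ralive P (\<pi>' i) (iota i) (T i) t = \<phi> i \<theta>i t))"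
      proof (cases "i < k")
        case True
        then have "Good (\<pi>' i)" using good' by blast
        then obtain \<theta>i where "\<theta>i \<in> \<Theta>" "\<forall>t. ralive P (\<pi>' i) (iota i) (T i) t = \<phi> i \<theta>i t"
          using a by blast
        then show ?thesis by blast
      next
        case False then show ?thesis using x0 by blast
      qed
    qed
    then have "\<exists>f. \<forall>i. f i \<in> \<Theta> \<and> (i < k \<longrightarrow> (\<forall>t. ralive P (\<pi>' i) (iota i) (T i) t = \<phi> i (f i) t))"
      by (rule choice)
    then obtain \<theta>' where th': "\<forall>i. \<theta>' i \<in> \<Theta> \<and> (i < k \<longrightarrow> (\<forall>t. ralive P (\<pi>' i) (iota i) (T i) t = \<phi> i (\<theta>' i) t))"
      by blast
    have th'1: "\<forall>i. \<theta>' i \<in> \<Theta>" using th' by blast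
    have th'2: "\<And>i t. i < k \<Longrightarrow> ralive P (\<pi>' i) (iota i) (T i) t = \<phi> i (\<theta>' i) t" using th' by blast
    have "exp_MHit P k iota T \<pi>' = (\<Sum>t. ennreal (\<Prod>i<k. ralive P (\<pi>' i) (iota i) (T i) t))"
      by (rule exp_eq_prod)
    also have "\<dots> = (\<Sum>t. ennreal (\<Prod>i<k. \<phi> i (\<theta>' i) t))"
      by (rule suminf_cong, rule arg_cong[where f = ennreal], rule prod.cong) (simp_all add: th'2)
    finally have "exp_MHit P k iota T \<pi>' = (\<Sum>t. ennreal (\<Prod>i<k. \<phi> i (\<theta>' i) t))" .
    moreover have "(\<Sum>t. ennreal (\<Prod>i<k. \<phi> i (\<theta> i) t)) \<le> (\<Sum>t. ennreal (\<Prod>i<k. \<phi> i (\<theta>' i) t))"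
      using min th'1 by blast
    ultimately show ?thesis using e\<pi> by simp
  qed
  have "exp_MHit P k iota T \<pi> = (INF \<pi>'\<in>{\<pi>'. \<forall>i<k. Good (\<pi>' i)}. exp_MHit P k iota T \<pi>')"
  proof (rule order.antisym)
    show "exp_MHit P k iota T \<pi> \<le> (INF \<pi>'\<in>{\<pi>'. \<forall>i<k. Good (\<pi>' i)}. exp_MHit P k iota T \<pi>')"
      by (rule INF_greatest) (use le in blast)
    show "(INF \<pi>'\<in>{\<pi>'. \<forall>i<k. Good (\<pi>' i)}. exp_MHit P k iota T \<pi>') \<le> exp_MHit P k iota T \<pi>"
      by (rule INF_lower) (use \<pi> in blast)
  qed
  then show ?thesis using \<pi> by blast
qed

theorem mainTheorem3:
  fixes P :: "'s::finite \<Rightarrow> 'a::finite \<Rightarrow> 's \<Rightarrow> real"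
    and k :: nat and iota :: "nat \<Rightarrow> 's" and T :: "nat \<Rightarrow> 's set"
  assumes "is_MSSP P k iota T"
  shows "(\<exists>\<pi>. in_Pi P k \<pi> \<and>
            exp_MHit P k iota T \<pi> = (INF \<pi>'\<in>{\<pi>'. in_Pi P k \<pi>'}. exp_MHit P k iota T \<pi>'))
       \<and> (\<forall>n\<ge>1. \<exists>\<pi>. in_Pi_n P k n \<pi> \<and>
            exp_MHit P k iota T \<pi> = (INF \<pi>'\<in>{\<pi>'. in_Pi_n P k n \<pi>'}. exp_MHit P k iota T \<pi>'))"
proof
  have mdp: "is_MDP P" using assms unfolding is_MSSP_def by auto
  have "\<exists>\<pi>. (\<forall>i<k. (\<exists>Mem. valid_strat P Mem (\<pi> i))) \<and>
     exp_MHit P k iota T \<pi> = (INF \<pi>'\<in>{\<pi>'. \<forall>i<k. (\<exists>Mem. valid_strat P Mem (\<pi>' i))}. exp_MHit P k iota T \<pi>')"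
  proof (rule opt_from_param[where \<Theta> = "ThM P" and \<phi> = "\<lambda>i \<theta> t. phiM P (iota i) (T i) \<theta> t"])
    show "compact (ThM P)" by (rule compact_ThM)
    show "ThM P \<noteq> {}" by (rule ThM_ne[OF mdp])
    show "continuous_on (ThM P) (\<lambda>\<theta>. phiM P (iota i) (T i) \<theta> t)" for i t by (rule cont_phiM)
    show "\<exists>\<theta>\<in>ThM P. \<forall>t. ralive P \<sigma> (iota i) (T i) t = phiM P (iota i) (T i) \<theta> t"
      if "\<exists>Mem. valid_strat P Mem \<sigma>" for i \<sigma>
      using that kuhn[OF mdp] by blast
    show "\<exists>\<sigma>. (\<exists>Mem. valid_strat P Mem \<sigma>) \<and> (\<forall>t. ralive P \<sigma> (iota i) (T i) t = phiM P (iota i) (T i) \<theta> t)"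
      if "\<theta> \<in> ThM P" for i \<theta>
      using valid_markov[OF that] ralive_markov[OF mdp that] by blast
  qed
  then show "\<exists>\<pi>. in_Pi P k \<pi> \<and>
            exp_MHit P k iota T \<pi> = (INF \<pi>'\<in>{\<pi>'. in_Pi P k \<pi>'}. exp_MHit P k iota T \<pi>')"
    unfolding in_Pi_def .
  show "\<forall>n\<ge>1. \<exists>\<pi>. in_Pi_n P k n \<pi> \<and>
            exp_MHit P k iota T \<pi> = (INF \<pi>'\<in>{\<pi>'. in_Pi_n P k n \<pi>'}. exp_MHit P k iota T \<pi>')"
  proof (intro allI impI)
    fix n :: nat assume n: "1 \<le> n"
    have "\<exists>\<pi>. (\<forall>i<k. (\<exists>Mem. finite Mem \<and> card Mem \<le> n \<and> valid_strat P Mem (\<pi> i))) \<and>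
       exp_MHit P k iota T \<pi> = (INF \<pi>'\<in>{\<pi>'. \<forall>i<k. (\<exists>Mem. finite Mem \<and> card Mem \<le> n \<and> valid_strat P Mem (\<pi>' i))}. exp_MHit P k iota T \<pi>')"
    proof (rule opt_from_param[where \<Theta> = "ThN P n" and \<phi> = "\<lambda>i \<theta> t. phiN P (iota i) (T i) n \<theta> t"])
      show "compact (ThN P n)" by (rule compact_ThN)
      show "ThN P n \<noteq> {}" by (rule ThN_ne[OF mdp n])
      show "continuous_on (ThN P n) (\<lambda>\<theta>. phiN P (iota i) (T i) n \<theta> t)" for i t by (rule cont_phiN)
      show "\<exists>\<theta>\<in>ThN P n. \<forall>t. ralive P \<sigma> (iota i) (T i) t = phiN P (iota i) (T i) n \<theta> t"
        if "\<exists>Mem. finite Mem \<and> card Mem \<le> n \<and> valid_strat P Mem \<sigma>" for i \<sigma>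
        using that rename_fin[OF mdp] by blast
      show "\<exists>\<sigma>. (\<exists>Mem. finite Mem \<and> card Mem \<le> n \<and> valid_strat P Mem \<sigma>) \<and>
          (\<forall>t. ralive P \<sigma> (iota i) (T i) t = phiN P (iota i) (T i) n \<theta> t)"
        if "\<theta> \<in> ThN P n" for i \<theta>
      proof -
        have "finite {..<n} \<and> card {..<n} \<le> n \<and> valid_strat P {..<n} (mk_fin \<theta>)"
          using valid_fin[OF that] by simp
        then show ?thesis using ralive_fin[OF mdp that] by blast
      qed
    qed
    then show "\<exists>\<pi>. in_Pi_n P k n \<pi> \<and>
            exp_MHit P k iota T \<pi> = (INF \<pi>'\<in>{\<pi>'. in_Pi_n P k n \<pi>'}. exp_MHit P k iota T \<pi>')"
      unfolding in_Pi_n_def .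
  qed
qed

end
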